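(* Let $y\in\mathbb{R}^n$, $F\in\mathbb{R}^n$, $Z\in\mathbb{R}^{n\times m}$, and let $\theta=(\theta_1,\dots,\theta_q)^T$ with $\theta_1=\sigma^2>0$, where $\Sigma=\Sigma(\theta_2,\dots,\theta_q)\in\mathbb{R}^{m\times m}$ is a covariance matrix depending differentiably on $\theta_2,\dots,\theta_q$ (and not on $\sigma^2$). Put $C=Z\Sigma Z^T+\sigma^2I_n$. For each $i=1,\dots,n$ let $N(i)\subseteq\{1,\dots,i-1\}$ be a conditioning set, and define $$A_i=\left(Z\Sigma Z^T\right)_{i,N(i)}\left(C_{N(i)}\right)^{-1}\in\mathbb{R}^{1\times|N(i)|},\qquad D_i=C_{i,i}-A_i\left(Z\Sigma Z^T\right)_{N(i),i}.$$ Let $B$ be the $n\times n$ lower triangular matrix with ones on the diagonal, $(B)_{i,N(i)}=-A_i$, and zeros elsewhere, and let $D=\mathrm{diag}(D_1,\dots,D_n)$. Let $$\tilde L(y,F,\theta)=\frac12(y-F)^TB^TD^{-1}B(y-F)+\frac12\sum_{i=1}^n\log D_i+\frac n2\log(2\pi)$$ be the negative log-likelihood of $y\sim\mathcal{N}(F,B^{-1}DB^{-T})$. Then for $1\le k\le q$, $$\frac{\partial \tilde L(y,F,\theta)}{\partial\theta_k}=\frac12\left(2u_k^Tu-u^T\frac{\partial D}{\partial\theta_k}u\right)+\frac12\sum_{i=1}^n\frac1{D_i}\frac{\partial D_i}{\partial\theta_k},$$ where $u=D^{-1}B(y-F)$, $u_k=\frac{\partial B}{\partial\theta_k}(y-F)$,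 and $\frac{\partial B}{\partial\theta_k}$ is lower triangular and $\frac{\partial D}{\partial\theta_k}$ diagonal, with non-zero entries given, for $1<k\le q$, by $$\left(\frac{\partial B}{\partial\theta_k}\right)_{i,N(i)}=-\frac{\partial A_i}{\partial\theta_k}=-\left(Z\frac{\partial\Sigma}{\partial\theta_k}Z^T\right)_{i,N(i)}\left(C_{N(i)}\right)^{-1}+\left(Z\Sigma Z^T\right)_{i,N(i)}\left(C_{N(i)}\right)^{-1}\left(Z\frac{\partial\Sigma}{\partial\theta_k}Z^T\right)_{N(i)}\left(C_{N(i)}\right)^{-1},$$ $$\frac{\partial D_i}{\partial\theta_k}=\left(Z\frac{\partial\Sigma}{\partial\theta_k}Z^T\right)_{i,i}-\frac{\partial A_i}{\partial\theta_k}\left(Z\Sigma Z^T\right)_{N(i),i}-A_i\left(Z\frac{\partial\Sigma}{\partial\theta_k}Z^T\right)_{N(i),i},$$ and, for $k=1$ (i.e. $\theta_1=\sigma^2$), by $$\left(\frac{\partial B}{\partial\sigma^2}\right)_{i,N(i)}=\left(Z\Sigma Z^T\right)_{i,N(i)}\left(C_{N(i)}\right)^{-2},\qquad \frac{\partial D_i}{\partial\sigma^2}=1-\frac{\partial A_i}{\partial\sigma^2}\left(Z\Sigma Z^T\right)_{N(i),i}.$$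
   Context: For a matrix $M$ and index set $N(i)$, $M_{i,N(i)}$ denotes the submatrix with row $i$ and columns $N(i)$, $M_{N(i),i}$ the submatrix with rows $N(i)$ and column $i$, and $M_{N(i)}$ the submatrix with rows and columns $N(i)$. The matrices $B,D$ define the Vecchia approximation $y\approx\mathcal{N}(F,B^{-1}DB^{-T})$ of the Gaussian model $y=F+Zb+\epsilon$, $b\sim\mathcal{N}(0,\Sigma)$, $\epsilon\sim\mathcal{N}(0,\sigma^2I_n)$, obtained by replacing $p(y_i\mid y_1,\dots,y_{i-1})$ by $p(y_i\mid y_{N(i)})$ (in the paper $N(i)$ are nearest-neighbor sets, e.g. the indices of the nearest neighbors of location $s_i$ among $s_1,\dots,s_{i-1}$). Derivatives with respect to $\sigma^2$ are taken with $\Sigma$ held fixed. *)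

theory Defs
  imports "HOL-Analysis.Analysis" "Jordan_Normal_Form.Gauss_Jordan_Elimination"
    "Jordan_Normal_Form.DL_Submatrix"
begin

text \<open>Indices of rows/columns are 0-based (JNF convention); parameters theta are
  1-based: theta 1 = sigma^2, theta 2 .. theta q parametrise Sigma.\<close>

definition minv :: "real mat \<Rightarrow> real mat" where
  "minv M = the (mat_inverse M)"

definition Gm :: "real mat \<Rightarrow> real mat \<Rightarrow> real mat" where
  "Gm Z S = Z * S * transpose_mat Z"

definition Cm :: "real mat \<Rightarrow> real mat \<Rightarrow> real \<Rightarrow> real mat" where
  "Cm Z S s = Gm Z S + s \<cdot>\<^sub>m 1\<^sub>m (dim_row Z)"

definition CNinv :: "real mat \<Rightarrow> real mat \<Rightarrow> real \<Rightarrow> (nat \<Rightarrow> nat set) \<Rightarrow> nat \<Rightarrow> real mat" where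
  "CNinv Z S s N i = minv (submatrix (Cm Z S s) (N i) (N i))"

definition Avec :: "real mat \<Rightarrow> real mat \<Rightarrow> real \<Rightarrow> (nat \<Rightarrow> nat set) \<Rightarrow> nat \<Rightarrow> real mat" where
  "Avec Z S s N i = submatrix (Gm Z S) {i} (N i) * CNinv Z S s N i"

definition Dsc :: "real mat \<Rightarrow> real mat \<Rightarrow> real \<Rightarrow> (nat \<Rightarrow> nat set) \<Rightarrow> nat \<Rightarrow> real" where
  "Dsc Z S s N i = Cm Z S s $$ (i,i) - (Avec Z S s N i * submatrix (Gm Z S) (N i) {i}) $$ (0,0)"

text \<open>position of column j within N(i) (submatrix orders indices increasingly)\<close>
definition posN :: "(nat \<Rightarrow> nat set) \<Rightarrow> nat \<Rightarrow> nat \<Rightarrow> nat" where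
  "posN N i j = card {j' \<in> N i. j' < j}"

definition scatter :: "nat \<Rightarrow> (nat \<Rightarrow> nat set) \<Rightarrow> (nat \<Rightarrow> real mat) \<Rightarrow> real mat" where
  "scatter n N R = mat n n (\<lambda>(i,j). if j \<in> N i then R i $$ (0, posN N i j) else 0)"

definition Bm :: "real mat \<Rightarrow> real mat \<Rightarrow> real \<Rightarrow> (nat \<Rightarrow> nat set) \<Rightarrow> real mat" where
  "Bm Z S s N = mat (dim_row Z) (dim_row Z) (\<lambda>(i,j). if i = j then 1
      else if j \<in> N i then - (Avec Z S s N i $$ (0, posN N i j)) else 0)"

definition Dm :: "real mat \<Rightarrow> real mat \<Rightarrow> real \<Rightarrow> (nat \<Rightarrow> nat set) \<Rightarrow> real mat" where
  "Dm Z S s N = mat_diag (dim_row Z) (Dsc Z S s N)"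

definition Ltilde :: "real vec \<Rightarrow> real vec \<Rightarrow> real mat \<Rightarrow> real mat \<Rightarrow> real \<Rightarrow> (nat \<Rightarrow> nat set) \<Rightarrow> real" where
  "Ltilde y F Z S s N =
    (let n = dim_row Z; r = y - F; B = Bm Z S s N; D = Dm Z S s N in
      1/2 * (r \<bullet> ((transpose_mat B * minv D * B) *\<^sub>v r))
      + 1/2 * (\<Sum>i<n. ln (Dsc Z S s N i)) + real n / 2 * ln (2 * pi))"

text \<open>Derivatives w.r.t. theta_k, k > 1; H = dSigma/dtheta_k.\<close>
definition dA_theta :: "real mat \<Rightarrow> real mat \<Rightarrow> real \<Rightarrow> (nat \<Rightarrow> nat set) \<Rightarrow> real mat \<Rightarrow> nat \<Rightarrow> real mat" where
  "dA_theta Z S s N H i =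
     submatrix (Z * H * transpose_mat Z) {i} (N i) * CNinv Z S s N i
     - submatrix (Gm Z S) {i} (N i) * CNinv Z S s N i
         * submatrix (Z * H * transpose_mat Z) (N i) (N i) * CNinv Z S s N i"

definition dD_theta :: "real mat \<Rightarrow> real mat \<Rightarrow> real \<Rightarrow> (nat \<Rightarrow> nat set) \<Rightarrow> real mat \<Rightarrow> nat \<Rightarrow> real" where
  "dD_theta Z S s N H i =
     (Z * H * transpose_mat Z) $$ (i,i)
     - (dA_theta Z S s N H i * submatrix (Gm Z S) (N i) {i}) $$ (0,0)
     - (Avec Z S s N i * submatrix (Z * H * transpose_mat Z) (N i) {i}) $$ (0,0)"

definition dB_sigma_row :: "real mat \<Rightarrow> real mat \<Rightarrow> real \<Rightarrow> (nat \<Rightarrow> nat set) \<Rightarrow> nat \<Rightarrow> real mat" where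
  "dB_sigma_row Z S s N i = submatrix (Gm Z S) {i} (N i) * (CNinv Z S s N i ^\<^sub>m 2)"

definition dA_sigma :: "real mat \<Rightarrow> real mat \<Rightarrow> real \<Rightarrow> (nat \<Rightarrow> nat set) \<Rightarrow> nat \<Rightarrow> real mat" where
  "dA_sigma Z S s N i = - dB_sigma_row Z S s N i"

definition dD_sigma :: "real mat \<Rightarrow> real mat \<Rightarrow> real \<Rightarrow> (nat \<Rightarrow> nat set) \<Rightarrow> nat \<Rightarrow> real" where
  "dD_sigma Z S s N i = 1 - (dA_sigma Z S s N i * submatrix (Gm Z S) (N i) {i}) $$ (0,0)"

text \<open>dB/dtheta_k and dD/dtheta_k (k = 1 is sigma^2; dS k = dSigma/dtheta_k for k > 1).\<close>
definition dBm :: "real mat \<Rightarrow> real mat \<Rightarrow> real \<Rightarrow> (nat \<Rightarrow> nat set) \<Rightarrow> (nat \<Rightarrow> real mat) \<Rightarrow> nat \<Rightarrow> real mat" where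
  "dBm Z S s N dS k = (if k = 1 then scatter (dim_row Z) N (dB_sigma_row Z S s N)
     else scatter (dim_row Z) N (\<lambda>i. - dA_theta Z S s N (dS k) i))"

definition dDi :: "real mat \<Rightarrow> real mat \<Rightarrow> real \<Rightarrow> (nat \<Rightarrow> nat set) \<Rightarrow> (nat \<Rightarrow> real mat) \<Rightarrow> nat \<Rightarrow> nat \<Rightarrow> real" where
  "dDi Z S s N dS k i = (if k = 1 then dD_sigma Z S s N i else dD_theta Z S s N (dS k) i)"

definition dDm :: "real mat \<Rightarrow> real mat \<Rightarrow> real \<Rightarrow> (nat \<Rightarrow> nat set) \<Rightarrow> (nat \<Rightarrow> real mat) \<Rightarrow> nat \<Rightarrow> real mat" where
  "dDm Z S s N dS k = mat_diag (dim_row Z) (dDi Z S s N dS k)"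

definition gradL :: "real vec \<Rightarrow> real vec \<Rightarrow> real mat \<Rightarrow> real mat \<Rightarrow> real \<Rightarrow> (nat \<Rightarrow> nat set) \<Rightarrow> (nat \<Rightarrow> real mat) \<Rightarrow> nat \<Rightarrow> real" where
  "gradL y F Z S s N dS k =
    (let r = y - F;
         u = minv (Dm Z S s N) *\<^sub>v (Bm Z S s N *\<^sub>v r);
         uk = dBm Z S s N dS k *\<^sub>v r in
      1/2 * (2 * (uk \<bullet> u) - u \<bullet> (dDm Z S s N dS k *\<^sub>v u))
      + 1/2 * (\<Sum>i<dim_row Z. 1 / Dsc Z S s N i * dDi Z S s N dS k i))"

end

theory Submission
  imports Defs "Jordan_Normal_Form.Determinant"
begin

definition hasMD :: "(real \<Rightarrow> real mat) \<Rightarrow> real mat \<Rightarrow> real \<Rightarrow> nat \<Rightarrow> nat \<Rightarrow> bool" where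
 "hasMD f f' x nr nc \<longleftrightarrow> f' \<in> carrier_mat nr nc \<and> eventually (\<lambda>t. f t \<in> carrier_mat nr nc) (nhds x) \<and>
   (\<forall>a<nr. \<forall>b<nc. ((\<lambda>t. f t $$ (a,b)) has_real_derivative f' $$ (a,b)) (at x))"

lemma DERIV_ev: "DERIV g x :> v \<Longrightarrow> eventually (\<lambda>t. f t = g t) (nhds x) \<Longrightarrow> u = v \<Longrightarrow> DERIV f x :> u"
  using DERIV_cong_ev[of x x f g u v] by blast

lemma hasMD_carrier: "hasMD f f' x nr nc \<Longrightarrow> f x \<in> carrier_mat nr nc"
  unfolding hasMD_def using eventually_nhds_x_imp_x by blast

lemma hasMD_dcarrier: "hasMD f f' x nr nc \<Longrightarrow> f' \<in> carrier_mat nr nc"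
  unfolding hasMD_def by blast

lemma hasMD_ev: "hasMD f f' x nr nc \<Longrightarrow> eventually (\<lambda>t. f t \<in> carrier_mat nr nc) (nhds x)"
  unfolding hasMD_def by blast

lemma hasMD_D: "hasMD f f' x nr nc \<Longrightarrow> a < nr \<Longrightarrow> b < nc \<Longrightarrow>
   ((\<lambda>t. f t $$ (a,b)) has_real_derivative f' $$ (a,b)) (at x)"
  unfolding hasMD_def by blast

lemma hasMD_const: "A \<in> carrier_mat nr nc \<Longrightarrow> hasMD (\<lambda>t. A) (0\<^sub>m nr nc) x nr nc"
  unfolding hasMD_def by auto

lemma hasMD_add: assumes f: "hasMD f f' x nr nc" and g: "hasMD g g' x nr nc"
  shows "hasMD (\<lambda>t. f t + g t) (f' + g') x nr nc"
proof -
  have ev: "eventually (\<lambda>t. f t \<in> carrier_mat nr nc \<and> g t \<in> carrier_mat nr nc) (nhds x)"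
    using hasMD_ev[OF f] hasMD_ev[OF g] by (rule eventually_conj)
  show ?thesis unfolding hasMD_def
  proof (intro conjI allI impI)
    show "f' + g' \<in> carrier_mat nr nc" using hasMD_dcarrier[OF f] hasMD_dcarrier[OF g] by auto
    show "eventually (\<lambda>t. f t + g t \<in> carrier_mat nr nc) (nhds x)" using ev by (rule eventually_mono) auto
    fix a b assume ab: "a < nr" "b < nc"
    show "((\<lambda>t. (f t + g t) $$ (a,b)) has_real_derivative (f'+g') $$ (a,b)) (at x)"
    proof (rule DERIV_ev[OF DERIV_add[OF hasMD_D[OF f ab] hasMD_D[OF g ab]]])
      show "eventually (\<lambda>t. (f t + g t) $$ (a,b) = f t $$ (a,b) + g t $$ (a,b)) (nhds x)"
        using ev by (rule eventually_mono) (use ab in auto)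
      show "(f' + g') $$ (a,b) = f' $$ (a,b) + g' $$ (a,b)"
        using hasMD_dcarrier[OF f] hasMD_dcarrier[OF g] ab by auto
    qed
  qed
qed

lemma hasMD_smult: assumes s: "(s has_real_derivative s') (at x)" and A: "A \<in> carrier_mat nr nc"
  shows "hasMD (\<lambda>t. s t \<cdot>\<^sub>m A) (s' \<cdot>\<^sub>m A) x nr nc"
  unfolding hasMD_def
proof (intro conjI allI impI)
  fix a b assume ab: "a < nr" "b < nc"
  show "((\<lambda>t. (s t \<cdot>\<^sub>m A) $$ (a,b)) has_real_derivative (s' \<cdot>\<^sub>m A) $$ (a,b)) (at x)"
    using DERIV_cmult_right[OF s, of "A $$ (a,b)"] ab A by auto
qed (use A in auto)

lemma hasMD_transpose: assumes f: "hasMD f f' x nr nc"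
  shows "hasMD (\<lambda>t. transpose_mat (f t)) (transpose_mat f') x nc nr"
  unfolding hasMD_def
proof (intro conjI allI impI)
  show "transpose_mat f' \<in> carrier_mat nc nr" using hasMD_dcarrier[OF f] by auto
  show "eventually (\<lambda>t. transpose_mat (f t) \<in> carrier_mat nc nr) (nhds x)"
    using hasMD_ev[OF f] by (rule eventually_mono) auto
  fix a b assume ab: "a < nc" "b < nr"
  show "((\<lambda>t. transpose_mat (f t) $$ (a,b)) has_real_derivative transpose_mat f' $$ (a,b)) (at x)"
  proof (rule DERIV_ev[OF hasMD_D[OF f, of b a]])
    show "eventually (\<lambda>t. transpose_mat (f t) $$ (a,b) = f t $$ (b,a)) (nhds x)"
      using hasMD_ev[OF f] by (rule eventually_mono) (use ab in auto)
  qed (use ab hasMD_dcarrier[OF f] in auto)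
qed

lemma hasMD_mult: assumes f: "hasMD f f' x nr n" and g: "hasMD g g' x n nc"
  shows "hasMD (\<lambda>t. f t * g t) (f' * g x + f x * g') x nr nc"
proof -
  have ev: "eventually (\<lambda>t. f t \<in> carrier_mat nr n \<and> g t \<in> carrier_mat n nc) (nhds x)"
    using hasMD_ev[OF f] hasMD_ev[OF g] by (rule eventually_conj)
  note fx = hasMD_carrier[OF f] and gx = hasMD_carrier[OF g]
  note f' = hasMD_dcarrier[OF f] and g' = hasMD_dcarrier[OF g]
  show ?thesis unfolding hasMD_def
  proof (intro conjI allI impI)
    show "f' * g x + f x * g' \<in> carrier_mat nr nc" using fx gx f' g' by auto
    show "eventually (\<lambda>t. f t * g t \<in> carrier_mat nr nc) (nhds x)" using ev by (rule eventually_mono) auto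
    fix a b assume ab: "a < nr" "b < nc"
    have D: "((\<lambda>t. \<Sum>c\<in>{0..<n}. f t $$ (a,c) * g t $$ (c,b)) has_real_derivative
        (\<Sum>c\<in>{0..<n}. f' $$ (a,c) * g x $$ (c,b) + g' $$ (c,b) * f x $$ (a,c))) (at x)"
      by (rule DERIV_sum, rule DERIV_mult) (use hasMD_D[OF f] hasMD_D[OF g] ab in auto)
    show "((\<lambda>t. (f t * g t) $$ (a,b)) has_real_derivative (f' * g x + f x * g') $$ (a,b)) (at x)"
    proof (rule DERIV_ev[OF D])
      show "eventually (\<lambda>t. (f t * g t) $$ (a,b) = (\<Sum>c\<in>{0..<n}. f t $$ (a,c) * g t $$ (c,b))) (nhds x)"
        using ev by (rule eventually_mono) (use ab in \<open>auto simp: scalar_prod_def\<close>)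
      show "(f' * g x + f x * g') $$ (a,b) = (\<Sum>c\<in>{0..<n}. f' $$ (a,c) * g x $$ (c,b) + g' $$ (c,b) * f x $$ (a,c))"
        using ab fx gx f' g' by (auto simp: scalar_prod_def sum.distrib mult.commute)
    qed
  qed
qed

lemma hasMD_submatrix: assumes f: "hasMD f f' x nr nc" and I: "I \<subseteq> {..<nr}" and J: "J \<subseteq> {..<nc}"
  shows "hasMD (\<lambda>t. submatrix (f t) I J) (submatrix f' I J) x (card I) (card J)"
proof -
  have cI: "{i. i < nr \<and> i \<in> I} = I" using I by auto
  have cJ: "{i. i < nc \<and> i \<in> J} = J" using J by auto
  have fI: "finite I" using I finite_subset by blast
  have fJ: "finite J" using J finite_subset by blast
  note f' = hasMD_dcarrier[OF f]
  show ?thesis unfolding hasMD_def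
  proof (intro conjI allI impI)
    show "submatrix f' I J \<in> carrier_mat (card I) (card J)" using f' cI cJ
      by (auto simp: dim_submatrix)
    show "eventually (\<lambda>t. submatrix (f t) I J \<in> carrier_mat (card I) (card J)) (nhds x)"
      using hasMD_ev[OF f] by (rule eventually_mono) (use cI cJ in \<open>auto simp: dim_submatrix\<close>)
    fix a b assume ab: "a < card I" "b < card J"
    have pa: "pick I a < nr" using pick_in_set[of a I] ab I by auto
    have pb: "pick J b < nc" using pick_in_set[of b J] ab J by auto
    show "((\<lambda>t. submatrix (f t) I J $$ (a,b)) has_real_derivative submatrix f' I J $$ (a,b)) (at x)"
    proof (rule DERIV_ev[OF hasMD_D[OF f pa pb]])
      show "eventually (\<lambda>t. submatrix (f t) I J $$ (a,b) = f t $$ (pick I a, pick J b)) (nhds x)"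
        using hasMD_ev[OF f] by (rule eventually_mono) (use cI cJ ab in \<open>auto simp: submatrix_index\<close>)
      show "submatrix f' I J $$ (a, b) = f' $$ (pick I a, pick J b)"
        using f' cI cJ ab by (auto simp: submatrix_index)
    qed
  qed
qed

lemma hasMD_diag: assumes d: "\<And>i. i < n \<Longrightarrow> ((\<lambda>t. d t i) has_real_derivative d' i) (at x)"
  shows "hasMD (\<lambda>t. mat_diag n (d t)) (mat_diag n d') x n n"
  unfolding hasMD_def
proof (intro conjI allI impI)
  fix a b assume ab: "a < n" "b < n"
  show "((\<lambda>t. mat_diag n (d t) $$ (a,b)) has_real_derivative mat_diag n d' $$ (a,b)) (at x)"
    using ab d[of b] by (cases "a = b") (auto simp: mat_diag_def)
qed auto

lemma ev_ne0: assumes "DERIV g x :> D" "g x \<noteq> 0" shows "eventually (\<lambda>t. g t \<noteq> 0) (nhds x)"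
proof -
  have "(g \<longlongrightarrow> g x) (at x)" using DERIV_continuous[OF assms(1)] continuous_at by blast
  then have "eventually (\<lambda>t. g t \<noteq> 0) (at x)" using tendsto_imp_eventually_ne assms(2) by blast
  then show ?thesis using assms(2) eventually_nhds_conv_at by blast
qed

lemma differentiable_ev: fixes f g :: "real \<Rightarrow> real" shows "g differentiable (at x) \<Longrightarrow> eventually (\<lambda>t. f t = g t) (nhds x) \<Longrightarrow> f differentiable (at x)"
proof -
  assume g: "g differentiable (at x)" and ev: "eventually (\<lambda>t. f t = g t) (nhds x)"
  from g obtain D where "DERIV g x :> D" unfolding real_differentiable_def by blast
  then have "DERIV f x :> D" using DERIV_ev[OF _ ev refl] by blast
  then show ?thesis unfolding real_differentiable_def by blast
qed

lemma differentiable_prod_real: "finite S \<Longrightarrow> (\<forall>i\<in>S. (f i :: real \<Rightarrow> real) differentiable (at x)) \<Longrightarrow>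
   (\<lambda>t. \<Prod>i\<in>S. f i t) differentiable (at x)"
proof (induction S rule: finite_induct)
  case empty then show ?case by simp
next
  case (insert a S)
  have "(\<lambda>t. f a t * (\<Prod>i\<in>S. f i t)) differentiable (at x)"
    by (rule differentiable_mult) (use insert in auto)
  then show ?case unfolding prod.insert[OF insert.hyps] .
qed

lemma det_differentiable: fixes A :: "real \<Rightarrow> real mat" assumes ev: "eventually (\<lambda>t. A t \<in> carrier_mat n n) (nhds x)"
  and e: "\<And>a b. a < n \<Longrightarrow> b < n \<Longrightarrow> (\<lambda>t. A t $$ (a,b) :: real) differentiable (at x)"
  shows "(\<lambda>t. det (A t)) differentiable (at x)"
proof (rule differentiable_ev)
  show "(\<lambda>t. \<Sum>p\<in>{p. p permutes {0..<n}}. signof p * (\<Prod>i=0..<n. A t $$ (i, p i))) differentiable (at x)"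
  proof (rule differentiable_sum)
    show "finite {p. p permutes {0..<n}}" by (simp add: finite_permutations)
    show "\<forall>p\<in>{p. p permutes {0..<n}}. (\<lambda>t. signof p * (\<Prod>i=0..<n. A t $$ (i, p i))) differentiable (at x)"
    proof
      fix p assume "p \<in> {p. p permutes {0..<n}}"
      then have p: "\<And>i. i < n \<Longrightarrow> p i < n" by (auto simp: permutes_in_image)
      show "(\<lambda>t. signof p * (\<Prod>i=0..<n. A t $$ (i, p i))) differentiable (at x)"
      proof -
        have "(\<lambda>t. \<Prod>i=0..<n. A t $$ (i, p i)) differentiable (at x)"
          by (rule differentiable_prod_real) (use p e in auto)
        then show ?thesis using differentiable_mult[OF differentiable_const] by blast
      qed
    qed
  qed
  show "eventually (\<lambda>t. det (A t) = (\<Sum>p\<in>{p. p permutes {0..<n}}. signof p * (\<Prod>i=0..<n. A t $$ (i, p i)))) (nhds x)"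
    using ev by (rule eventually_mono) (rule det_def')
qed

lemma minv_ok: assumes A: "A \<in> carrier_mat n n" and d: "det A \<noteq> 0"
  shows "minv A \<in> carrier_mat n n \<and> A * minv A = 1\<^sub>m n \<and> minv A * A = 1\<^sub>m n"
proof -
  have "A \<in> Units (ring_mat TYPE(real) n ())" by (rule det_non_zero_imp_unit[OF A d])
  then have "mat_inverse A \<noteq> None" using mat_inverse(1)[OF A, where b="()"] by blast
  then obtain B where "mat_inverse A = Some B" by auto
  then show ?thesis using mat_inverse(2)[OF A] unfolding minv_def by auto
qed

lemma det_ne0_of_rinv: assumes A: "A \<in> carrier_mat n n" and C: "C \<in> carrier_mat n n" and AC: "A * C = 1\<^sub>m n"
  shows "det A \<noteq> (0::real)"
proof
  assume "det A = 0"
  then have "det (A * C) = 0" using det_mult[OF A C] by simp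
  then show False using AC by simp
qed

lemma minv_unique: assumes A: "A \<in> carrier_mat n n" and C: "C \<in> carrier_mat n n" and AC: "A * C = 1\<^sub>m n"
  shows "minv A = (C :: real mat)"
proof -
  have d: "det A \<noteq> 0" by (rule det_ne0_of_rinv[OF A C AC])
  note M = minv_ok[OF A d]
  have "minv A = minv A * (A * C)" unfolding AC using M by (intro right_mult_one_mat[symmetric]) auto
  also have "\<dots> = (minv A * A) * C" using M A C by (intro assoc_mult_mat[symmetric, of _ n n _ n _ n]) auto
  also have "\<dots> = C" using M C by simp
  finally show ?thesis .
qed

lemma minv_adj: assumes A: "A \<in> carrier_mat n n" and d: "det A \<noteq> (0::real)"
  shows "minv A = (1 / det A) \<cdot>\<^sub>m adj_mat A"
proof (rule minv_unique[OF A])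
  show "(1 / det A) \<cdot>\<^sub>m adj_mat A \<in> carrier_mat n n" using adj_mat(1)[OF A] by simp
  have "A * ((1 / det A) \<cdot>\<^sub>m adj_mat A) = (1 / det A) \<cdot>\<^sub>m (A * adj_mat A)"
    using mult_smult_distrib[OF A adj_mat(1)[OF A]] by simp
  also have "\<dots> = 1\<^sub>m n" unfolding adj_mat(2)[OF A] using d by (intro eq_matI) auto
  finally show "A * ((1 / det A) \<cdot>\<^sub>m adj_mat A) = 1\<^sub>m n" .
qed

lemma hasMD_inv: assumes f: "hasMD f f' x n n" and d: "det (f x) \<noteq> 0"
  shows "hasMD (\<lambda>t. minv (f t)) (- (minv (f x) * f' * minv (f x))) x n n"
proof -
  note fx = hasMD_carrier[OF f] and f' = hasMD_dcarrier[OF f] and ev = hasMD_ev[OF f]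
  have ediff: "(\<lambda>t. f t $$ (a,b)) differentiable (at x)" if "a<n" "b<n" for a b
    using hasMD_D[OF f that] real_differentiable_def by blast
  have ddiff: "(\<lambda>t. det (f t)) differentiable (at x)" by (rule det_differentiable[OF ev ediff])
  then obtain Dd where Dd: "DERIV (\<lambda>t. det (f t)) x :> Dd" unfolding real_differentiable_def by blast
  have evd: "eventually (\<lambda>t. det (f t) \<noteq> 0) (nhds x)" by (rule ev_ne0[OF Dd d])
  have ev2: "eventually (\<lambda>t. f t \<in> carrier_mat n n \<and> det (f t) \<noteq> 0) (nhds x)"
    using ev evd by (rule eventually_conj)
  define M where "M = minv (f x)"
  have M: "M \<in> carrier_mat n n" "f x * M = 1\<^sub>m n" "M * f x = 1\<^sub>m n" using minv_ok[OF fx d] M_def by auto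
  have mdiff: "(\<lambda>t. minv (f t) $$ (a,b)) differentiable (at x)" if ab: "a<n" "b<n" for a b
  proof (rule differentiable_ev)
    show "(\<lambda>t. inverse (det (f t)) * ((-1)^(b+a) * det (mat_delete (f t) b a))) differentiable (at x)"
    proof (rule differentiable_mult)
      show "(\<lambda>t. inverse (det (f t))) differentiable (at x)"
        using DERIV_inverse_fun[OF Dd d] real_differentiable_def by blast
      have "(\<lambda>t. det (mat_delete (f t) b a)) differentiable (at x)"
      proof (rule det_differentiable[where n="n-1"])
        show "eventually (\<lambda>t. mat_delete (f t) b a \<in> carrier_mat (n-1) (n-1)) (nhds x)"
          using ev by (rule eventually_mono) (rule mat_delete_carrier)
        fix i j assume ij: "i < n-1" "j < n-1"
        show "(\<lambda>t. mat_delete (f t) b a $$ (i,j)) differentiable (at x)"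
        proof (rule differentiable_ev)
          show "(\<lambda>t. f t $$ (if i < b then i else Suc i, if j < a then j else Suc j)) differentiable (at x)"
            by (rule ediff) (use ij in auto)
          show "eventually (\<lambda>t. mat_delete (f t) b a $$ (i,j) = f t $$ (if i < b then i else Suc i, if j < a then j else Suc j)) (nhds x)"
            using ev by (rule eventually_mono) (use ij in \<open>auto simp: mat_delete_def\<close>)
        qed
      qed
      then show "(\<lambda>t. (-1)^(b+a) * det (mat_delete (f t) b a)) differentiable (at x)"
        using differentiable_mult[OF differentiable_const] by blast
    qed
    show "eventually (\<lambda>t. minv (f t) $$ (a,b) = inverse (det (f t)) * ((-1)^(b+a) * det (mat_delete (f t) b a))) (nhds x)"
      using ev2 by (rule eventually_mono) (use ab in \<open>auto simp: minv_adj adj_mat_def cofactor_def divide_inverse\<close>)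
  qed
  define G' where "G' = mat n n (\<lambda>(a,b). deriv (\<lambda>t. minv (f t) $$ (a,b)) x)"
  have g: "hasMD (\<lambda>t. minv (f t)) G' x n n" unfolding hasMD_def
  proof (intro conjI allI impI)
    show "G' \<in> carrier_mat n n" by (simp add: G'_def)
    show "eventually (\<lambda>t. minv (f t) \<in> carrier_mat n n) (nhds x)"
      using ev2 by (rule eventually_mono) (use minv_ok in blast)
    fix a b assume ab: "a<n" "b<n"
    then show "DERIV (\<lambda>t. minv (f t) $$ (a,b)) x :> G' $$ (a,b)"
      using mdiff[OF ab] DERIV_deriv_iff_real_differentiable G'_def by simp
  qed
  note G'c = hasMD_dcarrier[OF g]
  have p: "hasMD (\<lambda>t. f t * minv (f t)) (f' * M + f x * G') x n n" using hasMD_mult[OF f g] M_def by simp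
  have P0: "f' * M + f x * G' = 0\<^sub>m n n"
  proof (rule eq_matI)
    fix a b assume ab: "a < dim_row (0\<^sub>m n n :: real mat)" "b < dim_col (0\<^sub>m n n :: real mat)"
    have 1: "DERIV (\<lambda>t. (f t * minv (f t)) $$ (a,b)) x :> (f' * M + f x * G') $$ (a,b)"
      using hasMD_D[OF p] ab by auto
    have 2: "DERIV (\<lambda>t. (f t * minv (f t)) $$ (a,b)) x :> 0"
    proof (rule DERIV_ev[OF DERIV_const[of "1\<^sub>m n $$ (a,b)" "at x"]])
      show "eventually (\<lambda>t. (f t * minv (f t)) $$ (a,b) = 1\<^sub>m n $$ (a,b)) (nhds x)"
        using ev2 by (rule eventually_mono) (use minv_ok in metis)
    qed simp
    show "(f' * M + f x * G') $$ (a,b) = 0\<^sub>m n n $$ (a,b)" using DERIV_unique[OF 1 2] ab by simp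
  qed (use f' M fx G'c in auto)
  have "M * (f' * M + f x * G') = M * (f' * M) + M * (f x * G')"
    by (rule mult_add_distrib_mat[of M n n]) (use f' M G'c fx in auto)
  also have "M * (f x * G') = (M * f x) * G'"
    by (rule assoc_mult_mat[symmetric, of _ n n _ n _ n]) (use M G'c fx in auto)
  also have "\<dots> = G'" using M G'c by simp
  finally have "0\<^sub>m n n = M * (f' * M) + G'" unfolding P0 using M by simp
  note eq = this
  have X: "M * (f' * M) \<in> carrier_mat n n" using M f' by auto
  have "G' = - (M * (f' * M))"
  proof (rule eq_matI)
    fix a b assume ab: "a < dim_row (- (M * (f' * M)))" "b < dim_col (- (M * (f' * M)))"
    then have ab': "a < n" "b < n" using X by auto
    have "0 = (M * (f' * M) + G') $$ (a,b)" using ab' by (simp add: eq[symmetric])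
    also have "\<dots> = (M * (f' * M)) $$ (a,b) + G' $$ (a,b)" using X G'c ab' by (intro index_add_mat) auto
    finally have e0: "0 = (M * (f' * M)) $$ (a,b) + G' $$ (a,b)" .
    have "(- (M * (f' * M))) $$ (a,b) = - ((M * (f' * M)) $$ (a,b))" using X ab' by (intro index_uminus_mat) auto
    then show "G' $$ (a,b) = (- (M * (f' * M))) $$ (a,b)" using e0 by linarith
  qed (use X G'c in auto)
  also have "\<dots> = - (M * f' * M)" using M f' by (subst assoc_mult_mat[of _ n n _ n _ n]) auto
  finally show ?thesis using g M_def by simp
qed

lemma cI_lemma: "I \<subseteq> {..<n} \<Longrightarrow> {i. i < n \<and> i \<in> I} = (I::nat set)"
  by (auto simp: subset_eq)
lemma sub_carrier: assumes A: "A \<in> carrier_mat n n" and I: "I \<subseteq> {..<n}"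
  shows "submatrix A I I \<in> carrier_mat (card I) (card I)"
proof -
  have d: "dim_row A = n" "dim_col A = n" using A by auto
  show ?thesis by (intro carrier_matI) (simp_all only: dim_submatrix d cI_lemma[OF I])
qed

definition emb :: "nat set \<Rightarrow> nat \<Rightarrow> real vec \<Rightarrow> real vec" where
  "emb I n w = vec n (\<lambda>j. if j \<in> I then w $ card {a\<in>I. a < j} else 0)"

lemma card_less_in: fixes I :: "nat set" assumes "finite I" "j \<in> I" shows "card {a\<in>I. a < j} < card I"
proof -
  have "{a\<in>I. a < j} \<subseteq> I - {j}" by auto
  then have "card {a\<in>I. a < j} \<le> card (I - {j})" using assms(1) by (intro card_mono) auto
  also have "\<dots> < card I" using card_Diff1_less[OF assms] .
  finally show ?thesis .
qed

lemma sum_emb: assumes I: "I \<subseteq> {..<n}"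
  shows "(\<Sum>j\<in>{0..<n}. emb I n w $ j * g j) = (\<Sum>a\<in>{0..<card I}. w $ a * g (pick I a))"
proof -
  have fI: "finite I" using I finite_subset by blast
  have "(\<Sum>j\<in>{0..<n}. emb I n w $ j * g j) = (\<Sum>j\<in>I. w $ card {a\<in>I. a < j} * g j)"
  proof (rule sum.mono_neutral_cong_right)
    show "finite {0..<n}" by simp
    show "I \<subseteq> {0..<n}" using I by auto
    show "\<forall>i\<in>{0..<n} - I. emb I n w $ i * g i = 0" by (simp add: emb_def)
    fix x assume x: "x \<in> I"
    then have "x < n" using I by auto
    then show "emb I n w $ x * g x = w $ card {a\<in>I. a < x} * g x" using x by (simp add: emb_def)
  qed
  also have "\<dots> = (\<Sum>a\<in>{0..<card I}. w $ a * g (pick I a))"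
  proof (rule sum.reindex_bij_witness[where i="pick I" and j="\<lambda>j. card {a\<in>I. a < j}"])
    fix a assume a: "a \<in> I"
    show "pick I (card {x\<in>I. x < a}) = a" by (rule pick_card_in_set[OF a])
    show "card {x\<in>I. x < a} \<in> {0..<card I}" using card_less_in[OF fI a] by auto
    show "w $ card {x\<in>I. x < a} * g (pick I (card {x\<in>I. x < a})) = w $ card {x\<in>I. x < a} * g a"
      by (simp add: pick_card_in_set[OF a])
  next
    fix b assume "b \<in> {0..<card I}"
    then have b: "b < card I" by simp
    show "card {x\<in>I. x < pick I b} = b" using card_pick[of b I] b by blast
    show "pick I b \<in> I" using pick_in_set[of b I] b by blast
  qed
  finally show ?thesis .
qed

lemma dim_emb[simp]: "dim_vec (emb I n w) = n" by (simp add: emb_def)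

lemma emb_carrier[simp]: "emb I n w \<in> carrier_vec n" by (simp add: emb_def)

lemma quad_sum: assumes A: "A \<in> carrier_mat n n" and v: "v \<in> carrier_vec n"
  shows "v \<bullet> (A *\<^sub>v v) = (\<Sum>i\<in>{0..<n}. v $ i * (\<Sum>j\<in>{0..<n}. A $$ (i,j) * v $ j))"
  using A v by (auto simp: scalar_prod_def intro!: sum.cong)

lemma emb_quad: assumes A: "A \<in> carrier_mat n n" and I: "I \<subseteq> {..<n}" and w: "w \<in> carrier_vec (card I)"
  shows "emb I n w \<bullet> (A *\<^sub>v emb I n w) = w \<bullet> (submatrix A I I *\<^sub>v w)"
proof -
  have cI: "{i. i < n \<and> i \<in> I} = I" by (rule cI_lemma[OF I])
  have sub: "submatrix A I I \<in> carrier_mat (card I) (card I)" by (rule sub_carrier[OF A I])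
  have "emb I n w \<bullet> (A *\<^sub>v emb I n w) = (\<Sum>i\<in>{0..<n}. emb I n w $ i * (\<Sum>j\<in>{0..<n}. A $$ (i,j) * emb I n w $ j))"
    by (rule quad_sum[OF A emb_carrier])
  also have "\<dots> = (\<Sum>a\<in>{0..<card I}. w $ a * (\<Sum>j\<in>{0..<n}. A $$ (pick I a,j) * emb I n w $ j))"
    by (rule sum_emb[OF I])
  also have "\<dots> = (\<Sum>a\<in>{0..<card I}. w $ a * (\<Sum>b\<in>{0..<card I}. submatrix A I I $$ (a,b) * w $ b))"
  proof (rule sum.cong[OF refl])
    fix a assume a: "a \<in> {0..<card I}"
    have "(\<Sum>j\<in>{0..<n}. A $$ (pick I a,j) * emb I n w $ j) = (\<Sum>j\<in>{0..<n}. emb I n w $ j * A $$ (pick I a,j))"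
      by (simp add: mult.commute)
    also have "\<dots> = (\<Sum>b\<in>{0..<card I}. w $ b * A $$ (pick I a, pick I b))" by (rule sum_emb[OF I])
    also have "\<dots> = (\<Sum>b\<in>{0..<card I}. submatrix A I I $$ (a,b) * w $ b)"
    proof (rule sum.cong[OF refl])
      fix b assume b: "b \<in> {0..<card I}"
      have dA: "dim_row A = n" "dim_col A = n" using A by auto
      have "submatrix A I I $$ (a,b) = A $$ (pick I a, pick I b)"
        by (rule submatrix_index) (use a b in \<open>simp_all only: dA cI atLeastLessThan_iff\<close>)
      then show "w $ b * A $$ (pick I a, pick I b) = submatrix A I I $$ (a,b) * w $ b"
        by (simp only: mult.commute)
    qed
    finally show "w $ a * (\<Sum>j\<in>{0..<n}. A $$ (pick I a,j) * emb I n w $ j) = w $ a * (\<Sum>b\<in>{0..<card I}. submatrix A I I $$ (a,b) * w $ b)"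
      by simp
  qed
  also have "\<dots> = w \<bullet> (submatrix A I I *\<^sub>v w)" by (rule quad_sum[OF sub w, symmetric])
  finally show ?thesis .
qed

lemma emb_sq: assumes I: "I \<subseteq> {..<n}" and w: "w \<in> carrier_vec (card I)"
  shows "emb I n w \<bullet> emb I n w = w \<bullet> w"
proof -
  have "emb I n w \<bullet> emb I n w = (\<Sum>j\<in>{0..<n}. emb I n w $ j * emb I n w $ j)" by (simp add: scalar_prod_def)
  also have "\<dots> = (\<Sum>a\<in>{0..<card I}. w $ a * emb I n w $ pick I a)" by (rule sum_emb[OF I])
  also have "\<dots> = (\<Sum>a\<in>{0..<card I}. w $ a * w $ a)"
  proof (rule sum.cong[OF refl])
    fix a assume a: "a \<in> {0..<card I}"
    then have "pick I a \<in> I" using pick_in_set[of a I] by auto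
    then show "w $ a * emb I n w $ pick I a = w $ a * w $ a"
      using I a card_pick[of a I] by (auto simp: emb_def)
  qed
  also have "\<dots> = w \<bullet> w" using w by (simp add: scalar_prod_def)
  finally show ?thesis .
qed

lemma sub_det_ne0: assumes C: "C \<in> carrier_mat n n" and quad: "\<And>v. v \<in> carrier_vec n \<Longrightarrow> v \<bullet> (C *\<^sub>v v) \<ge> s * (v \<bullet> v)"
  and s: "s > 0" and I: "I \<subseteq> {..<n}"
  shows "det (submatrix C I I) \<noteq> (0::real)"
proof
  have cI: "{i. i < n \<and> i \<in> I} = I" by (rule cI_lemma[OF I])
  have sub: "submatrix C I I \<in> carrier_mat (card I) (card I)" by (rule sub_carrier[OF C I])
  assume "det (submatrix C I I) = 0"
  then obtain w where w: "w \<in> carrier_vec (card I)" "w \<noteq> 0\<^sub>v (card I)" "submatrix C I I *\<^sub>v w = 0\<^sub>v (card I)"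
    using det_0_iff_vec_prod_zero[OF sub] by blast
  have "emb I n w \<bullet> (C *\<^sub>v emb I n w) = 0" using emb_quad[OF C I w(1)] w by simp
  moreover have "emb I n w \<bullet> emb I n w > 0"
  proof -
    obtain a where a: "a < card I" "w $ a \<noteq> 0" using w(1,2) by (metis carrier_vecD eq_vecI index_zero_vec)
    have "w $ a * w $ a \<le> (\<Sum>b\<in>{0..<card I}. w $ b * w $ b)"
      by (rule member_le_sum) (use a in auto)
    moreover have "w $ a * w $ a > 0" using a(2) by (auto simp: zero_less_mult_iff)
    ultimately show ?thesis unfolding emb_sq[OF I w(1)] using w(1) by (simp add: scalar_prod_def)
  qed
  ultimately show False using quad[OF emb_carrier, of I w] s
    by (smt (verit) mult_pos_pos)
qed


lemma mat_vec_sum: assumes A: "A \<in> carrier_mat n n" and v: "v \<in> carrier_vec n" and j: "j < n"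
  shows "(A *\<^sub>v v) $ j = (\<Sum>l\<in>{0..<n}. A $$ (j,l) * v $ l)"
  using A v j by (auto simp: scalar_prod_def)

lemma schur_pos:
  fixes C Ci :: "real mat"
  assumes C: "C \<in> carrier_mat n n" and quad: "\<And>v. v \<in> carrier_vec n \<Longrightarrow> v \<bullet> (C *\<^sub>v v) \<ge> s * (v \<bullet> v)"
   and s: "s > 0" and I: "I \<subseteq> {..<n}" and i: "i < n" "i \<notin> I"
   and Ci: "Ci \<in> carrier_mat (card I) (card I)" and inv: "submatrix C I I * Ci = 1\<^sub>m (card I)"
  shows "C $$ (i,i) - (\<Sum>d\<in>{0..<card I}. C $$ (i, pick I d) * (\<Sum>b\<in>{0..<card I}. Ci $$ (d,b) * C $$ (pick I b, i))) > 0"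
proof -
  let ?k = "card I"
  have cI: "{i. i < n \<and> i \<in> I} = I" by (rule cI_lemma[OF I])
  have sub: "submatrix C I I \<in> carrier_mat ?k ?k" by (rule sub_carrier[OF C I])
  have dC: "dim_row C = n" "dim_col C = n" using C by auto
  have pk: "pick I a \<in> I" "pick I a < n" if "a < ?k" for a
    using pick_in_set[of a I] that I by auto
  define y where "y = vec ?k (\<lambda>d. \<Sum>b\<in>{0..<?k}. Ci $$ (d,b) * C $$ (pick I b, i))"
  define e where "e = vec n (\<lambda>j. if j = i then 1 else (0::real))"
  define v where "v = e - emb I n y"
  have y: "y \<in> carrier_vec ?k" by (simp add: y_def)
  have e: "e \<in> carrier_vec n" by (simp add: e_def)
  have v: "v \<in> carrier_vec n" by (simp add: v_def e_def)
  have vj: "v $ j = e $ j - emb I n y $ j" if "j < n" for j using that by (simp add: v_def e_def)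
  have invE: "(\<Sum>b\<in>{0..<?k}. C $$ (pick I a, pick I b) * Ci $$ (b,d)) = (if a = d then 1 else 0)"
    if ad: "a < ?k" "d < ?k" for a d
  proof -
    have "(submatrix C I I * Ci) $$ (a,d) = (\<Sum>b\<in>{0..<?k}. submatrix C I I $$ (a,b) * Ci $$ (b,d))"
      using sub Ci ad by (simp add: scalar_prod_def)
    also have "\<dots> = (\<Sum>b\<in>{0..<?k}. C $$ (pick I a, pick I b) * Ci $$ (b,d))"
    proof (rule sum.cong[OF refl])
      fix b assume b: "b \<in> {0..<?k}"
      have "submatrix C I I $$ (a,b) = C $$ (pick I a, pick I b)"
        by (rule submatrix_index) (use ad b in \<open>simp_all only: dC cI atLeastLessThan_iff\<close>)
      then show "submatrix C I I $$ (a,b) * Ci $$ (b,d) = C $$ (pick I a, pick I b) * Ci $$ (b,d)" by simp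
    qed
    finally show ?thesis using inv ad by simp
  qed
  have F1: "(\<Sum>b\<in>{0..<?k}. C $$ (pick I a, pick I b) * y $ b) = C $$ (pick I a, i)" if a: "a < ?k" for a
  proof -
    have "(\<Sum>b\<in>{0..<?k}. C $$ (pick I a, pick I b) * y $ b)
        = (\<Sum>b\<in>{0..<?k}. \<Sum>d\<in>{0..<?k}. C $$ (pick I a, pick I b) * (Ci $$ (b,d) * C $$ (pick I d, i)))"
      by (rule sum.cong[OF refl]) (simp add: y_def sum_distrib_left)
    also have "\<dots> = (\<Sum>d\<in>{0..<?k}. \<Sum>b\<in>{0..<?k}. C $$ (pick I a, pick I b) * (Ci $$ (b,d) * C $$ (pick I d, i)))"
      by (rule sum.swap)
    also have "\<dots> = (\<Sum>d\<in>{0..<?k}. (\<Sum>b\<in>{0..<?k}. C $$ (pick I a, pick I b) * Ci $$ (b,d)) * C $$ (pick I d, i))"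
      by (rule sum.cong[OF refl]) (simp add: sum_distrib_right mult.assoc)
    also have "\<dots> = (\<Sum>d\<in>{0..<?k}. (if a = d then C $$ (pick I d, i) else 0))"
      by (rule sum.cong[OF refl]) (use invE a in simp)
    also have "\<dots> = C $$ (pick I a, i)" using a by simp
    finally show ?thesis .
  qed
  have Cv: "(C *\<^sub>v v) $ j = C $$ (j,i) - (\<Sum>b\<in>{0..<?k}. y $ b * C $$ (j, pick I b))" if j: "j < n" for j
  proof -
    have "(C *\<^sub>v v) $ j = (\<Sum>l\<in>{0..<n}. C $$ (j,l) * v $ l)" by (rule mat_vec_sum[OF C v j])
    also have "\<dots> = (\<Sum>l\<in>{0..<n}. C $$ (j,l) * e $ l) - (\<Sum>l\<in>{0..<n}. emb I n y $ l * C $$ (j,l))"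
      by (simp add: vj algebra_simps sum_subtractf)
    also have "(\<Sum>l\<in>{0..<n}. C $$ (j,l) * e $ l) = C $$ (j,i)"
    proof -
      have "(\<Sum>l\<in>{0..<n}. C $$ (j,l) * e $ l) = (\<Sum>l\<in>{0..<n}. if l = i then C $$ (j,l) else 0)"
        by (rule sum.cong[OF refl]) (simp add: e_def)
      also have "\<dots> = C $$ (j,i)" using i by simp
      finally show ?thesis .
    qed
    also have "(\<Sum>l\<in>{0..<n}. emb I n y $ l * C $$ (j,l)) = (\<Sum>b\<in>{0..<?k}. y $ b * C $$ (j, pick I b))"
      by (rule sum_emb[OF I])
    finally show ?thesis .
  qed
  have Cv0: "(C *\<^sub>v v) $ pick I a = 0" if a: "a < ?k" for a
    using Cv[OF pk(2)[OF a]] F1[OF a] by (simp add: mult.commute)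
  have vCv: "v \<bullet> (C *\<^sub>v v) = (C *\<^sub>v v) $ i"
  proof -
    have "v \<bullet> (C *\<^sub>v v) = (\<Sum>j\<in>{0..<n}. v $ j * (C *\<^sub>v v) $ j)" using C v by (simp add: scalar_prod_def)
    also have "\<dots> = (\<Sum>j\<in>{0..<n}. e $ j * (C *\<^sub>v v) $ j) - (\<Sum>j\<in>{0..<n}. emb I n y $ j * (C *\<^sub>v v) $ j)"
      by (simp add: vj algebra_simps sum_subtractf)
    also have "(\<Sum>j\<in>{0..<n}. e $ j * (C *\<^sub>v v) $ j) = (C *\<^sub>v v) $ i"
    proof -
      have "(\<Sum>j\<in>{0..<n}. e $ j * (C *\<^sub>v v) $ j) = (\<Sum>j\<in>{0..<n}. if j = i then (C *\<^sub>v v) $ j else 0)"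
        by (rule sum.cong[OF refl]) (simp add: e_def)
      also have "\<dots> = (C *\<^sub>v v) $ i" using i by simp
      finally show ?thesis .
    qed
    also have "(\<Sum>j\<in>{0..<n}. emb I n y $ j * (C *\<^sub>v v) $ j) = (\<Sum>a\<in>{0..<?k}. y $ a * (C *\<^sub>v v) $ pick I a)"
      by (rule sum_emb[OF I])
    also have "\<dots> = 0" using Cv0 by simp
    finally show ?thesis by simp
  qed
  have vi: "v $ i = 1" using i by (simp add: vj e_def emb_def)
  have vv: "v \<bullet> v \<ge> 1"
  proof -
    have "v $ i * v $ i \<le> (\<Sum>j\<in>{0..<n}. v $ j * v $ j)" by (rule member_le_sum) (use i in auto)
    then show ?thesis using vi v by (simp add: scalar_prod_def)
  qed
  have pos: "(C *\<^sub>v v) $ i > 0"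
  proof -
    have "s * 1 \<le> s * (v \<bullet> v)" using vv s by (intro mult_left_mono) auto
    then show ?thesis using quad[OF v] vCv s by linarith
  qed
  have "(C *\<^sub>v v) $ i = C $$ (i,i) - (\<Sum>d\<in>{0..<?k}. C $$ (i, pick I d) * y $ d)"
    using Cv[OF i(1)] by (simp add: mult.commute)
  also have "\<dots> = C $$ (i,i) - (\<Sum>d\<in>{0..<card I}. C $$ (i, pick I d) * (\<Sum>b\<in>{0..<card I}. Ci $$ (d,b) * C $$ (pick I b, i)))"
    by (simp add: y_def)
  finally show ?thesis using pos by simp
qed

lemma quad_deriv: assumes M: "hasMD M M' x n n" and r: "r \<in> carrier_vec n"
  shows "DERIV (\<lambda>t. r \<bullet> (M t *\<^sub>v r)) x :> r \<bullet> (M' *\<^sub>v r)"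
proof (rule DERIV_ev)
  show "DERIV (\<lambda>t. \<Sum>a\<in>{0..<n}. r $ a * (\<Sum>b\<in>{0..<n}. M t $$ (a,b) * r $ b)) x :>
     (\<Sum>a\<in>{0..<n}. r $ a * (\<Sum>b\<in>{0..<n}. M' $$ (a,b) * r $ b))"
    by (intro DERIV_sum DERIV_cmult DERIV_cmult_right hasMD_D[OF M]) auto
  show "eventually (\<lambda>t. r \<bullet> (M t *\<^sub>v r) = (\<Sum>a\<in>{0..<n}. r $ a * (\<Sum>b\<in>{0..<n}. M t $$ (a,b) * r $ b))) (nhds x)"
    using hasMD_ev[OF M] by (rule eventually_mono) (rule quad_sum[OF _ r])
  show "r \<bullet> (M' *\<^sub>v r) = (\<Sum>a\<in>{0..<n}. r $ a * (\<Sum>b\<in>{0..<n}. M' $$ (a,b) * r $ b))"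
    by (rule quad_sum[OF hasMD_dcarrier[OF M] r])
qed

lemma diag_mult_vec: assumes v: "v \<in> carrier_vec n"
  shows "mat_diag n f *\<^sub>v v = vec n (\<lambda>i. f i * v $ i)"
proof (rule eq_vecI)
  fix i assume "i < dim_vec (vec n (\<lambda>i. f i * v $ i))"
  then have i: "i < n" by simp
  have "(mat_diag n f *\<^sub>v v) $ i = (\<Sum>l\<in>{0..<n}. mat_diag n f $$ (i,l) * v $ l)"
    by (rule mat_vec_sum[OF mat_diag_dim v i])
  also have "\<dots> = (\<Sum>l\<in>{0..<n}. if l = i then f i * v $ l else 0)"
    by (rule sum.cong[OF refl]) (use i in \<open>auto simp: mat_diag_def\<close>)
  also have "\<dots> = f i * v $ i" using i by simp
  finally show "(mat_diag n f *\<^sub>v v) $ i = vec n (\<lambda>i. f i * v $ i) $ i" using i by simp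
qed (simp add: mat_diag_def)

lemma diag_sym: fixes f :: "nat \<Rightarrow> real" assumes v: "v \<in> carrier_vec n" and z: "z \<in> carrier_vec n"
  shows "v \<bullet> (mat_diag n f *\<^sub>v z) = (mat_diag n f *\<^sub>v v) \<bullet> z"
  using v z by (simp add: diag_mult_vec scalar_prod_def ac_simps)

lemma transp_scalar: fixes X :: "real mat" assumes X: "X \<in> carrier_mat n n" and r: "r \<in> carrier_vec n" and q: "q \<in> carrier_vec n"
  shows "r \<bullet> (transpose_mat X *\<^sub>v q) = (X *\<^sub>v r) \<bullet> q"
  using transpose_vec_mult_scalar[of "transpose_mat X" n n q r] X r q by simp


lemma Lt_abstract:
  fixes B :: "real \<Rightarrow> real mat" and d :: "real \<Rightarrow> nat \<Rightarrow> real"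
  assumes Bd: "hasMD B dB x n n"
    and dd: "\<And>i. i < n \<Longrightarrow> DERIV (\<lambda>t. d t i) x :> dd i"
    and pos: "\<And>i. i < n \<Longrightarrow> d x i > 0"
    and r: "r \<in> carrier_vec n"
  shows "DERIV (\<lambda>t. 1/2 * (r \<bullet> ((transpose_mat (B t) * minv (mat_diag n (d t)) * B t) *\<^sub>v r))
            + 1/2 * (\<Sum>i<n. ln (d t i)) + c) x :>
     1/2 * (2 * ((dB *\<^sub>v r) \<bullet> (minv (mat_diag n (d x)) *\<^sub>v (B x *\<^sub>v r)))
        - (minv (mat_diag n (d x)) *\<^sub>v (B x *\<^sub>v r)) \<bullet> (mat_diag n dd *\<^sub>v (minv (mat_diag n (d x)) *\<^sub>v (B x *\<^sub>v r))))
      + 1/2 * (\<Sum>i<n. 1 / d x i * dd i)"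
proof -
  define Di0 where "Di0 = mat_diag n (\<lambda>i. 1 / d x i)"
  define Ddd where "Ddd = mat_diag n dd"
  note B0 = hasMD_carrier[OF Bd] and dBc = hasMD_dcarrier[OF Bd]
  have Di0c: "Di0 \<in> carrier_mat n n" and Dddc: "Ddd \<in> carrier_mat n n" by (simp_all add: Di0_def Ddd_def)
  have hD: "hasMD (\<lambda>t. mat_diag n (d t)) Ddd x n n" unfolding Ddd_def by (rule hasMD_diag[OF dd])
  have DDi: "mat_diag n (d x) * Di0 = 1\<^sub>m n"
  proof -
    have "mat_diag n (d x) * Di0 = mat n n (\<lambda>(i,j). d x i * Di0 $$ (i,j))"
      by (rule mat_diag_mult_left[OF Di0c])
    also have "\<dots> = 1\<^sub>m n"
    proof (rule eq_matI)
      fix i j assume ij: "i < dim_row (1\<^sub>m n :: real mat)" "j < dim_col (1\<^sub>m n :: real mat)"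
      then have "d x i \<noteq> 0" using pos[of i] by auto
      then show "mat n n (\<lambda>(i,j). d x i * Di0 $$ (i,j)) $$ (i,j) = 1\<^sub>m n $$ (i,j)"
        using ij by (auto simp: Di0_def mat_diag_def)
    qed auto
    finally show ?thesis .
  qed
  have minv0: "minv (mat_diag n (d x)) = Di0" by (rule minv_unique[OF mat_diag_dim Di0c DDi])
  have det0: "det (mat_diag n (d x)) \<noteq> 0" by (rule det_ne0_of_rinv[OF mat_diag_dim Di0c DDi])
  have hDi: "hasMD (\<lambda>t. minv (mat_diag n (d t))) (- (Di0 * Ddd * Di0)) x n n"
    using hasMD_inv[OF hD det0] unfolding minv0 .
  have h1: "hasMD (\<lambda>t. transpose_mat (B t) * minv (mat_diag n (d t)))
      (transpose_mat dB * Di0 + transpose_mat (B x) * (- (Di0 * Ddd * Di0))) x n n"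
    using hasMD_mult[OF hasMD_transpose[OF Bd] hDi] unfolding minv0 .
  have h2: "hasMD (\<lambda>t. transpose_mat (B t) * minv (mat_diag n (d t)) * B t)
      ((transpose_mat dB * Di0 + transpose_mat (B x) * (- (Di0 * Ddd * Di0))) * B x
        + (transpose_mat (B x) * Di0) * dB) x n n"
    using hasMD_mult[OF h1 Bd] unfolding minv0 .
  define M' where "M' = (transpose_mat dB * Di0 + transpose_mat (B x) * (- (Di0 * Ddd * Di0))) * B x
        + (transpose_mat (B x) * Di0) * dB"
  have q: "DERIV (\<lambda>t. r \<bullet> ((transpose_mat (B t) * minv (mat_diag n (d t)) * B t) *\<^sub>v r)) x :> r \<bullet> (M' *\<^sub>v r)"
    using quad_deriv[OF h2 r] unfolding M'_def .
  have l: "DERIV (\<lambda>t. \<Sum>i<n. ln (d t i)) x :> (\<Sum>i<n. 1 / d x i * dd i)"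
    by (rule DERIV_sum, rule DERIV_chain2[OF DERIV_ln_divide dd]) (use pos in auto)
  have all: "DERIV (\<lambda>t. 1/2 * (r \<bullet> ((transpose_mat (B t) * minv (mat_diag n (d t)) * B t) *\<^sub>v r))
            + 1/2 * (\<Sum>i<n. ln (d t i)) + c) x :> 1/2 * (r \<bullet> (M' *\<^sub>v r)) + 1/2 * (\<Sum>i<n. 1 / d x i * dd i) + 0"
    by (intro DERIV_add DERIV_cmult q l DERIV_const)
  define w where "w = B x *\<^sub>v r"
  define uk where "uk = dB *\<^sub>v r"
  define u where "u = Di0 *\<^sub>v w"
  have wc: "w \<in> carrier_vec n" and ukc: "uk \<in> carrier_vec n" and uc: "u \<in> carrier_vec n"
    using B0 dBc r Di0c by (auto simp: w_def uk_def u_def)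
  define X where "X = transpose_mat dB * Di0 + transpose_mat (B x) * (- (Di0 * Ddd * Di0))"
  define Y where "Y = transpose_mat (B x) * Di0"
  have Xc: "X \<in> carrier_mat n n" and Yc: "Y \<in> carrier_mat n n"
    unfolding X_def Y_def using B0 dBc Di0c Dddc by auto
  have "M' *\<^sub>v r = (X * B x) *\<^sub>v r + (Y * dB) *\<^sub>v r"
    unfolding M'_def X_def[symmetric] Y_def[symmetric]
    by (rule add_mult_distrib_mat_vec) (use Xc Yc B0 dBc r in auto)
  also have "(X * B x) *\<^sub>v r = X *\<^sub>v w" unfolding w_def
    by (rule assoc_mult_mat_vec) (use Xc B0 r in auto)
  also have "(Y * dB) *\<^sub>v r = Y *\<^sub>v uk" unfolding uk_def
    by (rule assoc_mult_mat_vec) (use Yc dBc r in auto)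
  also have "X *\<^sub>v w = (transpose_mat dB * Di0) *\<^sub>v w + (transpose_mat (B x) * (- (Di0 * Ddd * Di0))) *\<^sub>v w"
    unfolding X_def by (rule add_mult_distrib_mat_vec) (use B0 dBc Di0c Dddc wc in auto)
  also have "(transpose_mat dB * Di0) *\<^sub>v w = transpose_mat dB *\<^sub>v u" unfolding u_def
    by (rule assoc_mult_mat_vec) (use dBc Di0c wc in auto)
  also have "(transpose_mat (B x) * (- (Di0 * Ddd * Di0))) *\<^sub>v w = transpose_mat (B x) *\<^sub>v ((- (Di0 * Ddd * Di0)) *\<^sub>v w)"
    by (rule assoc_mult_mat_vec) (use B0 Di0c Dddc wc in auto)
  also have "(- (Di0 * Ddd * Di0)) *\<^sub>v w = - (Di0 *\<^sub>v (Ddd *\<^sub>v u))"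
  proof -
    have "(- (Di0 * Ddd * Di0)) *\<^sub>v w = - ((Di0 * Ddd * Di0) *\<^sub>v w)"
      by (rule uminus_mult_mat_vec) (use Di0c Dddc wc in auto)
    also have "(Di0 * Ddd * Di0) *\<^sub>v w = (Di0 * Ddd) *\<^sub>v u" unfolding u_def
      by (rule assoc_mult_mat_vec) (use Di0c Dddc wc in auto)
    also have "\<dots> = Di0 *\<^sub>v (Ddd *\<^sub>v u)"
      by (rule assoc_mult_mat_vec) (use Di0c Dddc uc in auto)
    finally show ?thesis .
  qed
  also have "Y *\<^sub>v uk = transpose_mat (B x) *\<^sub>v (Di0 *\<^sub>v uk)" unfolding Y_def
    by (rule assoc_mult_mat_vec) (use B0 Di0c ukc in auto)
  finally have Mr: "M' *\<^sub>v r = transpose_mat dB *\<^sub>v u + transpose_mat (B x) *\<^sub>v (- (Di0 *\<^sub>v (Ddd *\<^sub>v u)))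
        + transpose_mat (B x) *\<^sub>v (Di0 *\<^sub>v uk)" .
  have zc: "Di0 *\<^sub>v (Ddd *\<^sub>v u) \<in> carrier_vec n" using Di0c Dddc uc by auto
  have "r \<bullet> (M' *\<^sub>v r) = r \<bullet> (transpose_mat dB *\<^sub>v u) + r \<bullet> (transpose_mat (B x) *\<^sub>v (- (Di0 *\<^sub>v (Ddd *\<^sub>v u))))
        + r \<bullet> (transpose_mat (B x) *\<^sub>v (Di0 *\<^sub>v uk))"
    unfolding Mr using r B0 dBc uc zc ukc Di0c
    by (simp add: scalar_prod_add_distrib[of _ n])
  also have "\<dots> = uk \<bullet> u + w \<bullet> (- (Di0 *\<^sub>v (Ddd *\<^sub>v u))) + w \<bullet> (Di0 *\<^sub>v uk)"
    unfolding uk_def w_def using r B0 dBc uc zc ukc Di0c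
    by (simp add: transp_scalar[of _ n])
  also have "w \<bullet> (- (Di0 *\<^sub>v (Ddd *\<^sub>v u))) = - (u \<bullet> (Ddd *\<^sub>v u))"
  proof -
    have "w \<bullet> (- (Di0 *\<^sub>v (Ddd *\<^sub>v u))) = - (w \<bullet> (Di0 *\<^sub>v (Ddd *\<^sub>v u)))"
      by (rule scalar_prod_uminus_right) (use wc zc Di0c in auto)
    also have "w \<bullet> (Di0 *\<^sub>v (Ddd *\<^sub>v u)) = u \<bullet> (Ddd *\<^sub>v u)"
      using diag_sym[OF wc, of "Ddd *\<^sub>v u" "\<lambda>i. 1 / d x i"] Dddc uc
      unfolding u_def Di0_def by simp
    finally show ?thesis .
  qed
  also have "w \<bullet> (Di0 *\<^sub>v uk) = uk \<bullet> u"
    using diag_sym[OF wc ukc, of "\<lambda>i. 1 / d x i"] comm_scalar_prod[OF ukc uc]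
    unfolding u_def Di0_def by simp
  finally have "r \<bullet> (M' *\<^sub>v r) = 2 * (uk \<bullet> u) - u \<bullet> (Ddd *\<^sub>v u)" by simp
  then show ?thesis using all unfolding minv0 u_def w_def uk_def Ddd_def by simp
qed

lemma quad_smult_one: assumes v: "v \<in> carrier_vec n"
  shows "v \<bullet> ((s \<cdot>\<^sub>m 1\<^sub>m n) *\<^sub>v v) = s * (v \<bullet> (v :: real vec))"
proof -
  have "v \<bullet> ((s \<cdot>\<^sub>m 1\<^sub>m n) *\<^sub>v v) = (\<Sum>i\<in>{0..<n}. v $ i * (\<Sum>j\<in>{0..<n}. (s \<cdot>\<^sub>m 1\<^sub>m n) $$ (i,j) * v $ j))"
    by (rule quad_sum[OF _ v]) simp
  also have "\<dots> = (\<Sum>i\<in>{0..<n}. v $ i * (s * v $ i))"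
  proof (rule sum.cong[OF refl])
    fix i assume i: "i \<in> {0..<n}"
    have "(\<Sum>j\<in>{0..<n}. (s \<cdot>\<^sub>m 1\<^sub>m n) $$ (i,j) * v $ j) = (\<Sum>j\<in>{0..<n}. if i = j then s * v $ j else 0)"
      by (rule sum.cong[OF refl]) (use i in auto)
    also have "\<dots> = s * v $ i" using i by simp
    finally show "v $ i * (\<Sum>j\<in>{0..<n}. (s \<cdot>\<^sub>m 1\<^sub>m n) $$ (i,j) * v $ j) = v $ i * (s * v $ i)" by simp
  qed
  also have "\<dots> = s * (v \<bullet> v)" using v by (simp add: scalar_prod_def sum_distrib_left ac_simps)
  finally show ?thesis .
qed

lemma quad_G: assumes Z: "Z \<in> carrier_mat n m" and S: "S \<in> carrier_mat m m"
  and psd: "\<And>x. x \<in> carrier_vec m \<Longrightarrow> 0 \<le> x \<bullet> (S *\<^sub>v x)" and v: "v \<in> carrier_vec n"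
  shows "0 \<le> v \<bullet> (Gm Z S *\<^sub>v (v :: real vec))"
proof -
  define p where "p = transpose_mat Z *\<^sub>v v"
  have p: "p \<in> carrier_vec m" using Z v by (simp add: p_def)
  have "Gm Z S *\<^sub>v v = (Z * S) *\<^sub>v p" unfolding Gm_def p_def
    by (rule assoc_mult_mat_vec) (use Z S v in auto)
  also have "\<dots> = Z *\<^sub>v (S *\<^sub>v p)" by (rule assoc_mult_mat_vec) (use Z S p in auto)
  finally have "v \<bullet> (Gm Z S *\<^sub>v v) = v \<bullet> (Z *\<^sub>v (S *\<^sub>v p))" by simp
  also have "\<dots> = p \<bullet> (S *\<^sub>v p)" unfolding p_def
    by (rule transpose_vec_mult_scalar[symmetric]) (use Z S p v in auto)
  finally show ?thesis using psd[OF p] by simp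
qed

lemma quad_C: assumes Z: "Z \<in> carrier_mat n m" and S: "S \<in> carrier_mat m m"
  and psd: "\<And>x. x \<in> carrier_vec m \<Longrightarrow> 0 \<le> x \<bullet> (S *\<^sub>v x)" and v: "v \<in> carrier_vec n"
  shows "s * (v \<bullet> v) \<le> v \<bullet> (Cm Z S s *\<^sub>v (v :: real vec))"
proof -
  have Gc: "Gm Z S \<in> carrier_mat n n" using Z S by (simp add: Gm_def)
  have dZ: "dim_row Z = n" using Z by auto
  have "Cm Z S s *\<^sub>v v = Gm Z S *\<^sub>v v + (s \<cdot>\<^sub>m 1\<^sub>m n) *\<^sub>v v" unfolding Cm_def dZ
    by (rule add_mult_distrib_mat_vec) (use Z Gc v in auto)
  then have "v \<bullet> (Cm Z S s *\<^sub>v v) = v \<bullet> (Gm Z S *\<^sub>v v + (s \<cdot>\<^sub>m 1\<^sub>m n) *\<^sub>v v)" by simp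
  also have "\<dots> = v \<bullet> (Gm Z S *\<^sub>v v) + v \<bullet> ((s \<cdot>\<^sub>m 1\<^sub>m n) *\<^sub>v v)"
  proof (rule scalar_prod_add_distrib[of _ n])
    show "(s \<cdot>\<^sub>m 1\<^sub>m n) *\<^sub>v v \<in> carrier_vec n"
      by (rule mult_mat_vec_carrier[of _ n n]) (use v in simp_all)
  qed (use Gc v in auto)
  finally have "v \<bullet> (Cm Z S s *\<^sub>v v) = v \<bullet> (Gm Z S *\<^sub>v v) + v \<bullet> ((s \<cdot>\<^sub>m 1\<^sub>m n) *\<^sub>v v)" .
  then show ?thesis using quad_G[OF Z S psd v] quad_smult_one[OF v, of s] by simp
qed


lemma pick_single: "pick {i} 0 = i"
  using pick_in_set[of 0 "{i}"] by simp

lemma sub_row: assumes G: "G \<in> carrier_mat n n" and i: "i < n" and N: "N \<subseteq> {..<n}" and d: "d < card N"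
  shows "submatrix G {i} N $$ (0,d) = G $$ (i, pick N d)"
proof -
  have dG: "dim_row G = n" "dim_col G = n" using G by auto
  have c1: "{j. j < n \<and> j \<in> {i}} = {i}" by (rule cI_lemma) (use i in auto)
  have "submatrix G {i} N $$ (0,d) = G $$ (pick {i} 0, pick N d)"
    by (rule submatrix_index) (use d in \<open>simp_all only: dG c1 cI_lemma[OF N] card_1_singleton_iff, auto\<close>)
  then show ?thesis unfolding pick_single .
qed

lemma sub_col: assumes G: "G \<in> carrier_mat n n" and i: "i < n" and N: "N \<subseteq> {..<n}" and d: "d < card N"
  shows "submatrix G N {i} $$ (d,0) = G $$ (pick N d, i)"
proof -
  have dG: "dim_row G = n" "dim_col G = n" using G by auto
  have c1: "{j. j < n \<and> j \<in> {i}} = {i}" by (rule cI_lemma) (use i in auto)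
  have "submatrix G N {i} $$ (d,0) = G $$ (pick N d, pick {i} 0)"
    by (rule submatrix_index) (use d in \<open>simp_all only: dG c1 cI_lemma[OF N], auto\<close>)
  then show ?thesis unfolding pick_single .
qed

lemma sub_row_carrier: assumes G: "G \<in> carrier_mat n n" and i: "i < n" and N: "N \<subseteq> {..<n}"
  shows "submatrix G {i} N \<in> carrier_mat 1 (card N)"
proof -
  have dG: "dim_row G = n" "dim_col G = n" using G by auto
  have c1: "{j. j < n \<and> j \<in> {i}} = {i}" by (rule cI_lemma) (use i in auto)
  show ?thesis by (intro carrier_matI) (simp_all only: dim_submatrix dG c1 cI_lemma[OF N], simp)
qed

lemma sub_col_carrier: assumes G: "G \<in> carrier_mat n n" and i: "i < n" and N: "N \<subseteq> {..<n}"
  shows "submatrix G N {i} \<in> carrier_mat (card N) 1"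
proof -
  have dG: "dim_row G = n" "dim_col G = n" using G by auto
  have c1: "{j. j < n \<and> j \<in> {i}} = {i}" by (rule cI_lemma) (use i in auto)
  show ?thesis by (intro carrier_matI) (simp_all only: dim_submatrix dG c1 cI_lemma[OF N], simp)
qed

lemma Dsc_pos: fixes Z S :: "real mat"
  assumes Z: "Z \<in> carrier_mat n m" and S: "S \<in> carrier_mat m m"
    and psd: "\<And>x. x \<in> carrier_vec m \<Longrightarrow> 0 \<le> x \<bullet> (S *\<^sub>v x)" and s: "s > 0"
    and I: "N i \<subseteq> {..<n}" and i: "i < n" "i \<notin> N i"
  shows "Dsc Z S s N i > 0"
proof -
  define C0 where "C0 = Cm Z S s"
  define G0 where "G0 = Gm Z S"
  define Ci0 where "Ci0 = CNinv Z S s N i"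
  define k where "k = card (N i)"
  have dZ: "dim_row Z = n" using Z by auto
  have G0c: "G0 \<in> carrier_mat n n" using Z S by (simp add: G0_def Gm_def)
  have C0c: "C0 \<in> carrier_mat n n" using G0c by (simp add: C0_def Cm_def G0_def dZ)
  have C0e: "C0 $$ (a,b) = G0 $$ (a,b) + (if a = b then s else 0)" if "a < n" "b < n" for a b
    using that G0c by (simp add: C0_def Cm_def G0_def dZ)
  have quad: "\<And>v. v \<in> carrier_vec n \<Longrightarrow> v \<bullet> (C0 *\<^sub>v v) \<ge> s * (v \<bullet> v)"
    unfolding C0_def by (rule quad_C[OF Z S psd])
  have det: "det (submatrix C0 (N i) (N i)) \<noteq> 0" by (rule sub_det_ne0[OF C0c quad s I])
  have Ci: "Ci0 \<in> carrier_mat k k" "submatrix C0 (N i) (N i) * Ci0 = 1\<^sub>m k"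
    using minv_ok[OF sub_carrier[OF C0c I] det] unfolding Ci0_def CNinv_def C0_def k_def by auto
  have pk: "pick (N i) a \<in> N i" "pick (N i) a < n" if "a < k" for a
    using pick_in_set[of a "N i"] that I unfolding k_def by auto
  have sch: "C0 $$ (i,i) - (\<Sum>d\<in>{0..<k}. C0 $$ (i, pick (N i) d) * (\<Sum>b\<in>{0..<k}. Ci0 $$ (d,b) * C0 $$ (pick (N i) b, i))) > 0"
    unfolding k_def by (rule schur_pos[OF C0c quad s I i Ci[unfolded k_def]])
  have R: "submatrix G0 {i} (N i) \<in> carrier_mat 1 k" unfolding k_def by (rule sub_row_carrier[OF G0c i(1) I])
  have Cc: "submatrix G0 (N i) {i} \<in> carrier_mat k 1" unfolding k_def by (rule sub_col_carrier[OF G0c i(1) I])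
  have A0: "Avec Z S s N i = submatrix G0 {i} (N i) * Ci0" by (simp add: Avec_def G0_def Ci0_def)
  have Ae: "Avec Z S s N i $$ (0,b) = (\<Sum>d\<in>{0..<k}. G0 $$ (i, pick (N i) d) * Ci0 $$ (d,b))" if b: "b < k" for b
  proof -
    have "Avec Z S s N i $$ (0,b) = (\<Sum>d\<in>{0..<k}. submatrix G0 {i} (N i) $$ (0,d) * Ci0 $$ (d,b))"
      unfolding A0 using R Ci(1) b by (simp add: scalar_prod_def)
    also have "\<dots> = (\<Sum>d\<in>{0..<k}. G0 $$ (i, pick (N i) d) * Ci0 $$ (d,b))"
      by (rule sum.cong[OF refl]) (simp add: sub_row[OF G0c i(1) I] k_def)
    finally show ?thesis .
  qed
  have Ac: "Avec Z S s N i \<in> carrier_mat 1 k" unfolding A0 using R Ci(1) by simp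
  have "(Avec Z S s N i * submatrix G0 (N i) {i}) $$ (0,0) = (\<Sum>b\<in>{0..<k}. Avec Z S s N i $$ (0,b) * submatrix G0 (N i) {i} $$ (b,0))"
    using Ac Cc by (simp add: scalar_prod_def)
  also have "\<dots> = (\<Sum>b\<in>{0..<k}. (\<Sum>d\<in>{0..<k}. G0 $$ (i, pick (N i) d) * Ci0 $$ (d,b)) * G0 $$ (pick (N i) b, i))"
    by (rule sum.cong[OF refl]) (simp add: Ae sub_col[OF G0c i(1) I] k_def)
  also have "\<dots> = (\<Sum>d\<in>{0..<k}. G0 $$ (i, pick (N i) d) * (\<Sum>b\<in>{0..<k}. Ci0 $$ (d,b) * G0 $$ (pick (N i) b, i)))"
  proof -
    have "(\<Sum>b\<in>{0..<k}. (\<Sum>d\<in>{0..<k}. G0 $$ (i, pick (N i) d) * Ci0 $$ (d,b)) * G0 $$ (pick (N i) b, i))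
        = (\<Sum>b\<in>{0..<k}. \<Sum>d\<in>{0..<k}. G0 $$ (i, pick (N i) d) * (Ci0 $$ (d,b) * G0 $$ (pick (N i) b, i)))"
      by (rule sum.cong[OF refl]) (simp only: sum_distrib_right mult.assoc)
    also have "\<dots> = (\<Sum>d\<in>{0..<k}. \<Sum>b\<in>{0..<k}. G0 $$ (i, pick (N i) d) * (Ci0 $$ (d,b) * G0 $$ (pick (N i) b, i)))"
      by (rule sum.swap)
    also have "\<dots> = (\<Sum>d\<in>{0..<k}. G0 $$ (i, pick (N i) d) * (\<Sum>b\<in>{0..<k}. Ci0 $$ (d,b) * G0 $$ (pick (N i) b, i)))"
      by (rule sum.cong[OF refl]) (simp only: sum_distrib_left)
    finally show ?thesis .
  qed
  also have "\<dots> = (\<Sum>d\<in>{0..<k}. C0 $$ (i, pick (N i) d) * (\<Sum>b\<in>{0..<k}. Ci0 $$ (d,b) * C0 $$ (pick (N i) b, i)))"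
  proof (rule sum.cong[OF refl])
    fix d assume d: "d \<in> {0..<k}"
    have "pick (N i) d \<noteq> i" using pk(1)[of d] d i(2) by auto
    then have e1: "C0 $$ (i, pick (N i) d) = G0 $$ (i, pick (N i) d)" using C0e[OF i(1) pk(2)] d by simp
    have e2: "(\<Sum>b\<in>{0..<k}. Ci0 $$ (d,b) * G0 $$ (pick (N i) b, i)) = (\<Sum>b\<in>{0..<k}. Ci0 $$ (d,b) * C0 $$ (pick (N i) b, i))"
    proof (rule sum.cong[OF refl])
      fix b assume b: "b \<in> {0..<k}"
      have "pick (N i) b \<noteq> i" using pk(1)[of b] b i(2) by auto
      then show "Ci0 $$ (d,b) * G0 $$ (pick (N i) b, i) = Ci0 $$ (d,b) * C0 $$ (pick (N i) b, i)"
        using C0e[OF pk(2) i(1)] b by simp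
    qed
    show "G0 $$ (i, pick (N i) d) * (\<Sum>b\<in>{0..<k}. Ci0 $$ (d,b) * G0 $$ (pick (N i) b, i)) =
          C0 $$ (i, pick (N i) d) * (\<Sum>b\<in>{0..<k}. Ci0 $$ (d,b) * C0 $$ (pick (N i) b, i))"
      using e1 e2 by simp
  qed
  finally have "Dsc Z S s N i = C0 $$ (i,i) - (\<Sum>d\<in>{0..<k}. C0 $$ (i, pick (N i) d) * (\<Sum>b\<in>{0..<k}. Ci0 $$ (d,b) * C0 $$ (pick (N i) b, i)))"
    by (simp add: Dsc_def C0_def G0_def)
  then show ?thesis using sch by simp
qed


lemma hasMD_eq: "hasMD f A x nr nc \<Longrightarrow> A = B \<Longrightarrow> hasMD f B x nr nc" by simp

definition dAgen :: "real mat \<Rightarrow> real mat \<Rightarrow> real mat \<Rightarrow> real \<Rightarrow> real \<Rightarrow> (nat \<Rightarrow> nat set) \<Rightarrow> nat \<Rightarrow> real mat" where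
 "dAgen Z S S' s s' N i = submatrix (Z * S' * transpose_mat Z) {i} (N i) * CNinv Z S s N i
    + submatrix (Gm Z S) {i} (N i) * (- (CNinv Z S s N i * submatrix (Z * S' * transpose_mat Z + s' \<cdot>\<^sub>m 1\<^sub>m (dim_row Z)) (N i) (N i) * CNinv Z S s N i))"

lemma model_derivs:
  fixes Z :: "real mat" and Sf :: "real \<Rightarrow> real mat" and sf :: "real \<Rightarrow> real"
  assumes Z: "Z \<in> carrier_mat n m" and Sd: "hasMD Sf S' x m m" and sd: "DERIV sf x :> s'"
    and psd: "\<And>v. v \<in> carrier_vec m \<Longrightarrow> 0 \<le> v \<bullet> (Sf x *\<^sub>v v)" and spos: "sf x > 0"
    and I: "N i \<subseteq> {..<n}" and i: "i < n" "i \<notin> N i"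
  shows "hasMD (\<lambda>t. Avec Z (Sf t) (sf t) N i) (dAgen Z (Sf x) S' (sf x) s' N i) x 1 (card (N i))
    \<and> DERIV (\<lambda>t. Dsc Z (Sf t) (sf t) N i) x :> (Z * S' * transpose_mat Z + s' \<cdot>\<^sub>m 1\<^sub>m n) $$ (i,i)
         - (dAgen Z (Sf x) S' (sf x) s' N i * submatrix (Gm Z (Sf x)) (N i) {i}
            + Avec Z (Sf x) (sf x) N i * submatrix (Z * S' * transpose_mat Z) (N i) {i}) $$ (0,0)"
proof -
  have dZ: "dim_row Z = n" using Z by auto
  note Sx = hasMD_carrier[OF Sd] and S'c = hasMD_dcarrier[OF Sd]
  have ZT: "transpose_mat Z \<in> carrier_mat m n" using Z by simp
  have hZS: "hasMD (\<lambda>t. Z * Sf t) (Z * S') x n m"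
    by (rule hasMD_eq[OF hasMD_mult[OF hasMD_const[OF Z] Sd]]) (use Z Sx S'c in simp)
  have hG: "hasMD (\<lambda>t. Gm Z (Sf t)) (Z * S' * transpose_mat Z) x n n"
    unfolding Gm_def
    by (rule hasMD_eq[OF hasMD_mult[OF hZS hasMD_const[OF ZT]]]) (use Z Sx S'c in simp)
  have hC: "hasMD (\<lambda>t. Cm Z (Sf t) (sf t)) (Z * S' * transpose_mat Z + s' \<cdot>\<^sub>m 1\<^sub>m n) x n n"
    unfolding Cm_def dZ by (rule hasMD_add[OF hG hasMD_smult[OF sd one_carrier_mat]])
  have hCN: "hasMD (\<lambda>t. submatrix (Cm Z (Sf t) (sf t)) (N i) (N i))
      (submatrix (Z * S' * transpose_mat Z + s' \<cdot>\<^sub>m 1\<^sub>m n) (N i) (N i)) x (card (N i)) (card (N i))"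
    by (rule hasMD_submatrix[OF hC I I])
  have C0c: "Cm Z (Sf x) (sf x) \<in> carrier_mat n n" by (rule hasMD_carrier[OF hC])
  have quad: "\<And>v. v \<in> carrier_vec n \<Longrightarrow> v \<bullet> (Cm Z (Sf x) (sf x) *\<^sub>v v) \<ge> sf x * (v \<bullet> v)"
    by (rule quad_C[OF Z Sx psd])
  have det: "det (submatrix (Cm Z (Sf x) (sf x)) (N i) (N i)) \<noteq> 0" by (rule sub_det_ne0[OF C0c quad spos I])
  have hCi: "hasMD (\<lambda>t. CNinv Z (Sf t) (sf t) N i)
     (- (CNinv Z (Sf x) (sf x) N i * submatrix (Z * S' * transpose_mat Z + s' \<cdot>\<^sub>m 1\<^sub>m n) (N i) (N i) * CNinv Z (Sf x) (sf x) N i))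
     x (card (N i)) (card (N i))"
    unfolding CNinv_def by (rule hasMD_inv[OF hCN det])
  have c1: "card {i} = 1" by simp
  have si: "{i} \<subseteq> {..<n}" using i by auto
  have hGi: "hasMD (\<lambda>t. submatrix (Gm Z (Sf t)) {i} (N i)) (submatrix (Z * S' * transpose_mat Z) {i} (N i)) x 1 (card (N i))"
    using hasMD_submatrix[OF hG si I] unfolding c1 .
  have hA: "hasMD (\<lambda>t. Avec Z (Sf t) (sf t) N i) (dAgen Z (Sf x) S' (sf x) s' N i) x 1 (card (N i))"
    unfolding Avec_def dAgen_def dZ using hasMD_mult[OF hGi hCi] by simp
  have hGc: "hasMD (\<lambda>t. submatrix (Gm Z (Sf t)) (N i) {i}) (submatrix (Z * S' * transpose_mat Z) (N i) {i}) x (card (N i)) 1"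
    using hasMD_submatrix[OF hG I si] unfolding c1 .
  have hP: "hasMD (\<lambda>t. Avec Z (Sf t) (sf t) N i * submatrix (Gm Z (Sf t)) (N i) {i})
     (dAgen Z (Sf x) S' (sf x) s' N i * submatrix (Gm Z (Sf x)) (N i) {i}
            + Avec Z (Sf x) (sf x) N i * submatrix (Z * S' * transpose_mat Z) (N i) {i}) x 1 1"
    by (rule hasMD_mult[OF hA hGc])
  have D: "DERIV (\<lambda>t. Dsc Z (Sf t) (sf t) N i) x :> (Z * S' * transpose_mat Z + s' \<cdot>\<^sub>m 1\<^sub>m n) $$ (i,i)
         - (dAgen Z (Sf x) S' (sf x) s' N i * submatrix (Gm Z (Sf x)) (N i) {i}
            + Avec Z (Sf x) (sf x) N i * submatrix (Z * S' * transpose_mat Z) (N i) {i}) $$ (0,0)"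
    unfolding Dsc_def by (rule DERIV_diff[OF hasMD_D[OF hC i(1) i(1)] hasMD_D[OF hP]]) simp_all
  show ?thesis using hA D by blast
qed

lemma final_generic:
  fixes Z :: "real mat" and Sf :: "real \<Rightarrow> real mat" and sf :: "real \<Rightarrow> real" and dBval :: "real mat"
    and dDval :: "nat \<Rightarrow> real"
  assumes Z: "Z \<in> carrier_mat n m" and y: "y \<in> carrier_vec n" and F: "F \<in> carrier_vec n"
   and Sd: "hasMD Sf S' x m m" and sd: "DERIV sf x :> s'"
   and psd: "\<And>v. v \<in> carrier_vec m \<Longrightarrow> 0 \<le> v \<bullet> (Sf x *\<^sub>v v)" and spos: "sf x > 0"
   and N: "\<And>i. i < n \<Longrightarrow> N i \<subseteq> {..<i}"
   and dBc: "dBval \<in> carrier_mat n n"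
   and Bmatch: "\<And>i j. i < n \<Longrightarrow> j < n \<Longrightarrow> j \<in> N i \<Longrightarrow> i \<noteq> j \<Longrightarrow>
        dBval $$ (i,j) = - (dAgen Z (Sf x) S' (sf x) s' N i $$ (0, posN N i j))"
   and Bzero: "\<And>i j. i < n \<Longrightarrow> j < n \<Longrightarrow> j \<notin> N i \<Longrightarrow> dBval $$ (i,j) = 0"
   and Dmatch: "\<And>i. i < n \<Longrightarrow> dDval i = (Z * S' * transpose_mat Z + s' \<cdot>\<^sub>m 1\<^sub>m n) $$ (i,i)
         - (dAgen Z (Sf x) S' (sf x) s' N i * submatrix (Gm Z (Sf x)) (N i) {i}
            + Avec Z (Sf x) (sf x) N i * submatrix (Z * S' * transpose_mat Z) (N i) {i}) $$ (0,0)"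
  shows "DERIV (\<lambda>t. Ltilde y F Z (Sf t) (sf t) N) x :>
      (let r = y - F; u = minv (Dm Z (Sf x) (sf x) N) *\<^sub>v (Bm Z (Sf x) (sf x) N *\<^sub>v r); uk = dBval *\<^sub>v r in
        1/2 * (2 * (uk \<bullet> u) - u \<bullet> (mat_diag n dDval *\<^sub>v u)) + 1/2 * (\<Sum>i<n. 1 / Dsc Z (Sf x) (sf x) N i * dDval i))
    \<and> (\<forall>i<n. \<forall>j<n. DERIV (\<lambda>t. Bm Z (Sf t) (sf t) N $$ (i,j)) x :> dBval $$ (i,j))
    \<and> (\<forall>i<n. DERIV (\<lambda>t. Dsc Z (Sf t) (sf t) N i) x :> dDval i)"
proof -
  have dZ: "dim_row Z = n" using Z by auto
  have Ni: "N i \<subseteq> {..<n}" "i \<notin> N i" if "i < n" for i using N[OF that] that by auto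
  have MD: "hasMD (\<lambda>t. Avec Z (Sf t) (sf t) N i) (dAgen Z (Sf x) S' (sf x) s' N i) x 1 (card (N i))
    \<and> DERIV (\<lambda>t. Dsc Z (Sf t) (sf t) N i) x :> dDval i" if i: "i < n" for i
    using model_derivs[where N=N and i=i, OF Z Sd sd psd spos Ni(1)[OF i] i Ni(2)[OF i]] Dmatch[OF i] by simp
  have Dd: "DERIV (\<lambda>t. Dsc Z (Sf t) (sf t) N i) x :> dDval i" if "i < n" for i using MD[OF that] by blast
  have Be: "DERIV (\<lambda>t. Bm Z (Sf t) (sf t) N $$ (i,j)) x :> dBval $$ (i,j)" if ij: "i < n" "j < n" for i j
  proof -
    have idx: "(\<lambda>t. Bm Z (Sf t) (sf t) N $$ (i,j)) = (\<lambda>t. if i = j then 1 else if j \<in> N i then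
        - (Avec Z (Sf t) (sf t) N i $$ (0, posN N i j)) else 0)"
      using ij by (simp add: Bm_def dZ)
    show ?thesis
    proof (cases "i = j")
      case True
      then have "j \<notin> N i" using Ni(2)[OF ij(1)] by simp
      then show ?thesis unfolding idx using True Bzero[OF ij] by simp
    next
      case False
      show ?thesis
      proof (cases "j \<in> N i")
        case True
        have fin: "finite (N i)" using Ni(1)[OF ij(1)] finite_subset by blast
        have p: "posN N i j < card (N i)" unfolding posN_def by (rule card_less_in[OF fin True])
        have "DERIV (\<lambda>t. - (Avec Z (Sf t) (sf t) N i $$ (0, posN N i j))) x :> - (dAgen Z (Sf x) S' (sf x) s' N i $$ (0, posN N i j))"
          by (rule DERIV_minus[OF hasMD_D[OF conjunct1[OF MD[OF ij(1)]]]]) (use p in simp_all)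
        then show ?thesis unfolding idx using False True Bmatch[OF ij True False] by simp
      next
        case F2: False
        then show ?thesis unfolding idx using False Bzero[OF ij F2] by simp
      qed
    qed
  qed
  have hB: "hasMD (\<lambda>t. Bm Z (Sf t) (sf t) N) dBval x n n"
    unfolding hasMD_def using dBc Be by (auto simp: Bm_def dZ)
  have pos: "Dsc Z (Sf x) (sf x) N i > 0" if i: "i < n" for i
    by (rule Dsc_pos[where N=N and i=i, OF Z hasMD_carrier[OF Sd] psd spos Ni(1)[OF i] i Ni(2)[OF i]])
  have r: "y - F \<in> carrier_vec n" using y F by simp
  have L: "DERIV (\<lambda>t. 1/2 * ((y - F) \<bullet> ((transpose_mat (Bm Z (Sf t) (sf t) N) * minv (mat_diag n (\<lambda>i. Dsc Z (Sf t) (sf t) N i)) * Bm Z (Sf t) (sf t) N) *\<^sub>v (y - F)))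
            + 1/2 * (\<Sum>i<n. ln (Dsc Z (Sf t) (sf t) N i)) + real n / 2 * ln (2 * pi)) x :>
     1/2 * (2 * ((dBval *\<^sub>v (y - F)) \<bullet> (minv (mat_diag n (\<lambda>i. Dsc Z (Sf x) (sf x) N i)) *\<^sub>v (Bm Z (Sf x) (sf x) N *\<^sub>v (y - F))))
        - (minv (mat_diag n (\<lambda>i. Dsc Z (Sf x) (sf x) N i)) *\<^sub>v (Bm Z (Sf x) (sf x) N *\<^sub>v (y - F))) \<bullet> (mat_diag n dDval *\<^sub>v (minv (mat_diag n (\<lambda>i. Dsc Z (Sf x) (sf x) N i)) *\<^sub>v (Bm Z (Sf x) (sf x) N *\<^sub>v (y - F)))))
      + 1/2 * (\<Sum>i<n. 1 / Dsc Z (Sf x) (sf x) N i * dDval i)"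
    by (rule Lt_abstract[OF hB Dd pos r])
  have L': "DERIV (\<lambda>t. Ltilde y F Z (Sf t) (sf t) N) x :>
      (let r = y - F; u = minv (Dm Z (Sf x) (sf x) N) *\<^sub>v (Bm Z (Sf x) (sf x) N *\<^sub>v r); uk = dBval *\<^sub>v r in
        1/2 * (2 * (uk \<bullet> u) - u \<bullet> (mat_diag n dDval *\<^sub>v u)) + 1/2 * (\<Sum>i<n. 1 / Dsc Z (Sf x) (sf x) N i * dDval i))"
    using L unfolding Ltilde_def Let_def Dm_def dZ by simp
  show ?thesis using L' Be Dd by blast
qed


lemma sub_zero: assumes I: "I \<subseteq> {..<n}" and J: "J \<subseteq> {..<n}"
  shows "submatrix (0\<^sub>m n n) I J = (0\<^sub>m (card I) (card J) :: real mat)"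
proof -
  have cI: "{i. i < n \<and> i \<in> I} = I" by (rule cI_lemma[OF I])
  have cJ: "{i. i < n \<and> i \<in> J} = J" by (rule cI_lemma[OF J])
  have d0: "dim_row (0\<^sub>m n n :: real mat) = n" "dim_col (0\<^sub>m n n :: real mat) = n" by simp_all
  show ?thesis
  proof (rule eq_matI)
    fix a b assume ab: "a < dim_row (0\<^sub>m (card I) (card J) :: real mat)" "b < dim_col (0\<^sub>m (card I) (card J) :: real mat)"
    have pa: "pick I a < n" using pick_in_set[of a I] ab I by auto
    have pb: "pick J b < n" using pick_in_set[of b J] ab J by auto
    have "submatrix (0\<^sub>m n n) I J $$ (a,b) = (0\<^sub>m n n :: real mat) $$ (pick I a, pick J b)"
      by (rule submatrix_index) (use ab in \<open>simp_all only: d0 cI cJ, auto\<close>)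
    then show "submatrix (0\<^sub>m n n) I J $$ (a,b) = (0\<^sub>m (card I) (card J) :: real mat) $$ (a,b)"
      using pa pb ab by simp
  qed (simp_all only: dim_submatrix d0 cI cJ index_zero_mat)
qed

lemma sub_one: assumes I: "I \<subseteq> {..<n}"
  shows "submatrix (1\<^sub>m n) I I = (1\<^sub>m (card I) :: real mat)"
proof -
  have cI: "{i. i < n \<and> i \<in> I} = I" by (rule cI_lemma[OF I])
  have d1: "dim_row (1\<^sub>m n :: real mat) = n" "dim_col (1\<^sub>m n :: real mat) = n" by simp_all
  show ?thesis
  proof (rule eq_matI)
    fix a b assume ab: "a < dim_row (1\<^sub>m (card I) :: real mat)" "b < dim_col (1\<^sub>m (card I) :: real mat)"
    have a: "a < card I" and b: "b < card I" using ab by simp_all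
    have inj: "pick I a = pick I b \<longleftrightarrow> a = b"
    proof
      assume "pick I a = pick I b"
      then have "card {x\<in>I. x < pick I a} = card {x\<in>I. x < pick I b}" by simp
      then show "a = b" using card_pick[of a I] card_pick[of b I] a b by simp
    qed simp
    have "submatrix (1\<^sub>m n) I I $$ (a,b) = (1\<^sub>m n :: real mat) $$ (pick I a, pick I b)"
      by (rule submatrix_index) (use ab in \<open>simp_all only: d1 cI, auto\<close>)
    have pa: "pick I a < n" using pick_in_set[of a I] a I by auto
    have pb: "pick I b < n" using pick_in_set[of b I] b I by auto
    then show "submatrix (1\<^sub>m n) I I $$ (a,b) = (1\<^sub>m (card I) :: real mat) $$ (a,b)"
      using pa pb a b inj \<open>submatrix (1\<^sub>m n) I I $$ (a,b) = (1\<^sub>m n :: real mat) $$ (pick I a, pick I b)\<close> by simp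
  qed (simp_all only: dim_submatrix d1 cI index_one_mat)
qed


lemma CNinv_carrier: fixes Z S :: "real mat"
  assumes Z: "Z \<in> carrier_mat n m" and S: "S \<in> carrier_mat m m"
    and psd: "\<And>x. x \<in> carrier_vec m \<Longrightarrow> 0 \<le> x \<bullet> (S *\<^sub>v x)" and s: "s > 0"
    and I: "N i \<subseteq> {..<n}"
  shows "CNinv Z S s N i \<in> carrier_mat (card (N i)) (card (N i))"
proof -
  have dZ: "dim_row Z = n" using Z by auto
  have C0c: "Cm Z S s \<in> carrier_mat n n" using Z S by (simp add: Cm_def Gm_def dZ)
  have det: "det (submatrix (Cm Z S s) (N i) (N i)) \<noteq> 0"
    by (rule sub_det_ne0[OF C0c _ s I]) (rule quad_C[OF Z S psd])
  show ?thesis using minv_ok[OF sub_carrier[OF C0c I] det] unfolding CNinv_def by blast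
qed

lemma spec_sigma: fixes Z S :: "real mat"
  assumes Z: "Z \<in> carrier_mat n m" and S: "S \<in> carrier_mat m m" and i: "i < n"
    and I: "N i \<subseteq> {..<n}" and Ci: "CNinv Z S s N i \<in> carrier_mat (card (N i)) (card (N i))"
  shows "dAgen Z S (0\<^sub>m m m) s 1 N i = - dB_sigma_row Z S s N i"
proof -
  define k where "k = card (N i)"
  define C where "C = CNinv Z S s N i"
  define R where "R = submatrix (Gm Z S) {i} (N i)"
  have dZ: "dim_row Z = n" using Z by auto
  have Cc: "C \<in> carrier_mat k k" using Ci by (simp add: C_def k_def)
  have G0c: "Gm Z S \<in> carrier_mat n n" using Z S by (simp add: Gm_def)
  have Rc: "R \<in> carrier_mat 1 k" unfolding R_def k_def by (rule sub_row_carrier[OF G0c i I])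
  have si: "{i} \<subseteq> {..<n}" using i by auto
  have e1: "Z * 0\<^sub>m m m * transpose_mat Z = 0\<^sub>m n n" using Z by simp
  have e2: "0\<^sub>m n n + 1 \<cdot>\<^sub>m 1\<^sub>m n = (1\<^sub>m n :: real mat)" by (rule eq_matI) auto
  have e3: "submatrix (0\<^sub>m n n) {i} (N i) = (0\<^sub>m 1 k :: real mat)"
    using sub_zero[OF si I] by (simp add: k_def)
  have e4: "submatrix (1\<^sub>m n) (N i) (N i) = (1\<^sub>m k :: real mat)" using sub_one[OF I] by (simp add: k_def)
  have "dAgen Z S (0\<^sub>m m m) s 1 N i = 0\<^sub>m 1 k * C + R * (- (C * 1\<^sub>m k * C))"
    unfolding dAgen_def dZ e1 e2 e3 e4 C_def[symmetric] R_def[symmetric] by simp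
  also have "\<dots> = - (R * (C * C))" using Cc Rc by simp
  also have "\<dots> = - dB_sigma_row Z S s N i"
    unfolding dB_sigma_row_def C_def[symmetric] R_def[symmetric] using Cc by (simp add: numeral_2_eq_2)
  finally show ?thesis .
qed

lemma spec_theta: fixes Z S H :: "real mat"
  assumes Z: "Z \<in> carrier_mat n m" and S: "S \<in> carrier_mat m m" and H: "H \<in> carrier_mat m m" and i: "i < n"
    and I: "N i \<subseteq> {..<n}" and Ci: "CNinv Z S s N i \<in> carrier_mat (card (N i)) (card (N i))"
  shows "dAgen Z S H s 0 N i = dA_theta Z S s N H i"
proof -
  define k where "k = card (N i)"
  define C where "C = CNinv Z S s N i"
  define R where "R = submatrix (Gm Z S) {i} (N i)"
  define W where "W = Z * H * transpose_mat Z"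
  have dZ: "dim_row Z = n" using Z by auto
  have Cc: "C \<in> carrier_mat k k" using Ci by (simp add: C_def k_def)
  have G0c: "Gm Z S \<in> carrier_mat n n" using Z S by (simp add: Gm_def)
  have Wc: "W \<in> carrier_mat n n" using Z H by (simp add: W_def)
  have Rc: "R \<in> carrier_mat 1 k" unfolding R_def k_def by (rule sub_row_carrier[OF G0c i I])
  have WR: "submatrix W {i} (N i) \<in> carrier_mat 1 k" unfolding k_def by (rule sub_row_carrier[OF Wc i I])
  have WI: "submatrix W (N i) (N i) \<in> carrier_mat k k" unfolding k_def by (rule sub_carrier[OF Wc I])
  have e1: "W + 0 \<cdot>\<^sub>m 1\<^sub>m n = W" using Wc by (intro eq_matI) auto
  have "dAgen Z S H s 0 N i = submatrix W {i} (N i) * C + R * (- (C * submatrix W (N i) (N i) * C))"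
    unfolding dAgen_def dZ W_def[symmetric] e1 C_def[symmetric] R_def[symmetric] ..
  also have "R * (- (C * submatrix W (N i) (N i) * C)) = - (R * C * submatrix W (N i) (N i) * C)"
    using Rc Cc WI by (simp add: assoc_mult_mat[of _ 1 k _ k _ k])
  also have "submatrix W {i} (N i) * C + - (R * C * submatrix W (N i) (N i) * C)
      = submatrix W {i} (N i) * C - R * C * submatrix W (N i) (N i) * C"
    by (rule minus_add_uminus_mat[symmetric, of _ 1 k]) (use WR Cc Rc WI in auto)
  also have "\<dots> = dA_theta Z S s N H i"
    unfolding dA_theta_def W_def[symmetric] C_def[symmetric] R_def[symmetric] ..
  finally show ?thesis .
qed

theorem proposition1:
  fixes n m q k :: nat and y F :: "real vec" and Z :: "real mat"
    and Sig :: "(nat \<Rightarrow> real) \<Rightarrow> real mat" and dSig :: "nat \<Rightarrow> real mat"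
    and th :: "nat \<Rightarrow> real" and N :: "nat \<Rightarrow> nat set"
  assumes y: "y \<in> carrier_vec n" and F: "F \<in> carrier_vec n"
    and Z: "Z \<in> carrier_mat n m"
    and q: "q \<ge> 1" and k: "k \<in> {1..q}"
    and sigma_pos: "th 1 > 0"
    and Sig_carrier: "\<And>t. Sig t \<in> carrier_mat m m"
    and Sig_dep: "\<And>t t'. (\<forall>j\<in>{2..q}. t j = t' j) \<Longrightarrow> Sig t = Sig t'"
    and Sig_sym: "transpose_mat (Sig th) = Sig th"
    and Sig_psd: "\<And>x. x \<in> carrier_vec m \<Longrightarrow> 0 \<le> x \<bullet> (Sig th *\<^sub>v x)"
    and dSig_carrier: "\<And>l. l \<in> {2..q} \<Longrightarrow> dSig l \<in> carrier_mat m m"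
    and Sig_deriv: "\<And>l a b. l \<in> {2..q} \<Longrightarrow> a < m \<Longrightarrow> b < m \<Longrightarrow>
          ((\<lambda>t. Sig (th(l := t)) $$ (a,b)) has_real_derivative (dSig l $$ (a,b))) (at (th l))"
    and N: "\<And>i. i < n \<Longrightarrow> N i \<subseteq> {..<i}"
  shows "((\<lambda>t. Ltilde y F Z (Sig (th(k := t))) ((th(k := t)) 1) N)
            has_real_derivative gradL y F Z (Sig th) (th 1) N dSig k) (at (th k))
      \<and> (\<forall>i<n. \<forall>j<n.
          ((\<lambda>t. Bm Z (Sig (th(k := t))) ((th(k := t)) 1) N $$ (i,j))
            has_real_derivative dBm Z (Sig th) (th 1) N dSig k $$ (i,j)) (at (th k)))
      \<and> (\<forall>i<n.
          ((\<lambda>t. Dsc Z (Sig (th(k := t))) ((th(k := t)) 1) N i)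
            has_real_derivative dDi Z (Sig th) (th 1) N dSig k i) (at (th k)))"
proof -
  have dZ: "dim_row Z = n" using Z by auto
  have S0: "Sig th \<in> carrier_mat m m" by (rule Sig_carrier)
  have Ni: "N i \<subseteq> {..<n}" if "i < n" for i using N[OF that] that by auto
  have Nii: "i \<notin> N i" if "i < n" for i using N[OF that] by auto
  have Ci: "CNinv Z (Sig th) (th 1) N i \<in> carrier_mat (card (N i)) (card (N i))" if "i < n" for i
    by (rule CNinv_carrier[where N=N and i=i, OF Z S0 Sig_psd sigma_pos Ni[OF that]])
  have G0c: "Gm Z (Sig th) \<in> carrier_mat n n" using Z S0 by (simp add: Gm_def)
  have Rc: "submatrix (Gm Z (Sig th)) {i} (N i) \<in> carrier_mat 1 (card (N i))" if "i < n" for i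
    by (rule sub_row_carrier[OF G0c that Ni[OF that]])
  have Colc: "submatrix (Gm Z (Sig th)) (N i) {i} \<in> carrier_mat (card (N i)) 1" if "i < n" for i
    by (rule sub_col_carrier[OF G0c that Ni[OF that]])
  have A0c: "Avec Z (Sig th) (th 1) N i \<in> carrier_mat 1 (card (N i))" if "i < n" for i
    unfolding Avec_def using Rc[OF that] Ci[OF that] by simp
  have posc: "posN N i j < card (N i)" if "i < n" "j \<in> N i" for i j
  proof -
    have fin: "finite (N i)" using Ni[OF that(1)] finite_subset by blast
    show ?thesis unfolding posN_def by (rule card_less_in[OF fin that(2)])
  qed
  have thk: "th(k := th k) = th" by simp
  have scat: "scatter n N R \<in> carrier_mat n n" for R by (simp add: scatter_def)
  have scat_in: "scatter n N R $$ (i,j) = R i $$ (0, posN N i j)" if "i < n" "j < n" "j \<in> N i" for R i j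
    using that by (simp add: scatter_def)
  have scat_out: "scatter n N R $$ (i,j) = 0" if "i < n" "j < n" "j \<notin> N i" for R i j
    using that by (simp add: scatter_def)
  show ?thesis
  proof (cases "k = 1")
    case True
    have Sfc: "Sig (th(k := t)) = Sig th" for t
      by (rule Sig_dep) (use True in auto)
    have Sd: "hasMD (\<lambda>t. Sig (th(k := t))) (0\<^sub>m m m) (th k) m m"
      unfolding Sfc by (rule hasMD_const[OF S0])
    have sd: "DERIV (\<lambda>t. (th(k := t)) 1) (th k) :> 1" using True by simp
    have e1: "Z * 0\<^sub>m m m * transpose_mat Z = 0\<^sub>m n n" using Z by simp
    have dAs: "dAgen Z (Sig th) (0\<^sub>m m m) (th 1) 1 N i = - dB_sigma_row Z (Sig th) (th 1) N i" if "i < n" for i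
      by (rule spec_sigma[where N=N and i=i, OF Z S0 that Ni[OF that] Ci[OF that]])
    have dBsc: "dB_sigma_row Z (Sig th) (th 1) N i \<in> carrier_mat 1 (card (N i))" if "i < n" for i
      unfolding dB_sigma_row_def using Rc[OF that] Ci[OF that] by simp
    have G: "DERIV (\<lambda>t. Ltilde y F Z (Sig (th(k := t))) ((th(k := t)) 1) N) (th k) :>
      (let r = y - F; u = minv (Dm Z (Sig (th(k := th k))) ((th(k := th k)) 1) N) *\<^sub>v (Bm Z (Sig (th(k := th k))) ((th(k := th k)) 1) N *\<^sub>v r);
          uk = dBm Z (Sig th) (th 1) N dSig k *\<^sub>v r in
        1/2 * (2 * (uk \<bullet> u) - u \<bullet> (mat_diag n (dDi Z (Sig th) (th 1) N dSig k) *\<^sub>v u))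
        + 1/2 * (\<Sum>i<n. 1 / Dsc Z (Sig (th(k := th k))) ((th(k := th k)) 1) N i * dDi Z (Sig th) (th 1) N dSig k i))
    \<and> (\<forall>i<n. \<forall>j<n. DERIV (\<lambda>t. Bm Z (Sig (th(k := t))) ((th(k := t)) 1) N $$ (i,j)) (th k) :> dBm Z (Sig th) (th 1) N dSig k $$ (i,j))
    \<and> (\<forall>i<n. DERIV (\<lambda>t. Dsc Z (Sig (th(k := t))) ((th(k := t)) 1) N i) (th k) :> dDi Z (Sig th) (th 1) N dSig k i)"
    proof (rule final_generic[OF Z y F Sd sd])
      show "\<And>v. v \<in> carrier_vec m \<Longrightarrow> 0 \<le> v \<bullet> (Sig (th(k := th k)) *\<^sub>v v)" unfolding thk by (rule Sig_psd)
      show "0 < (th(k := th k)) 1" unfolding thk by (rule sigma_pos)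
      show "\<And>i. i < n \<Longrightarrow> N i \<subseteq> {..<i}" by (rule N)
      show "dBm Z (Sig th) (th 1) N dSig k \<in> carrier_mat n n" unfolding dBm_def dZ using scat by simp
      fix i j assume ij: "i < n" "j < n"
      {
        assume j: "j \<in> N i" and "i \<noteq> j"
        have "dBm Z (Sig th) (th 1) N dSig k $$ (i,j) = dB_sigma_row Z (Sig th) (th 1) N i $$ (0, posN N i j)"
          unfolding dBm_def dZ using True scat_in[OF ij j] by simp
        also have "\<dots> = - ((- dB_sigma_row Z (Sig th) (th 1) N i) $$ (0, posN N i j))"
          using dBsc[OF ij(1)] posc[OF ij(1) j] by simp
        finally show "dBm Z (Sig th) (th 1) N dSig k $$ (i,j) =
           - (dAgen Z (Sig (th(k := th k))) (0\<^sub>m m m) ((th(k := th k)) 1) 1 N i $$ (0, posN N i j))"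
          unfolding thk dAs[OF ij(1)] .
      }
      {
        assume j: "j \<notin> N i"
        show "dBm Z (Sig th) (th 1) N dSig k $$ (i,j) = 0"
          unfolding dBm_def dZ using True scat_out[OF ij j] by simp
      }
    next
      fix i assume i: "i < n"
      have z: "submatrix (0\<^sub>m n n) (N i) {i} = (0\<^sub>m (card (N i)) 1 :: real mat)"
        using sub_zero[OF Ni[OF i], of "{i}"] i by simp
      have X: "dAgen Z (Sig th) (0\<^sub>m m m) (th 1) 1 N i * submatrix (Gm Z (Sig th)) (N i) {i} \<in> carrier_mat 1 1"
        unfolding dAs[OF i] using dBsc[OF i] Colc[OF i] by simp
      have "(Z * 0\<^sub>m m m * transpose_mat Z + 1 \<cdot>\<^sub>m 1\<^sub>m n) $$ (i,i)
         - (dAgen Z (Sig th) (0\<^sub>m m m) (th 1) 1 N i * submatrix (Gm Z (Sig th)) (N i) {i}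
            + Avec Z (Sig th) (th 1) N i * submatrix (Z * 0\<^sub>m m m * transpose_mat Z) (N i) {i}) $$ (0,0)
         = 1 - (dAgen Z (Sig th) (0\<^sub>m m m) (th 1) 1 N i * submatrix (Gm Z (Sig th)) (N i) {i}) $$ (0,0)"
        unfolding e1 z using i X A0c[OF i] by simp
      also have "\<dots> = dDi Z (Sig th) (th 1) N dSig k i"
        unfolding dDi_def dD_sigma_def dA_sigma_def dAs[OF i] using True by simp
      finally show "dDi Z (Sig th) (th 1) N dSig k i =
        (Z * 0\<^sub>m m m * transpose_mat Z + 1 \<cdot>\<^sub>m 1\<^sub>m n) $$ (i,i)
         - (dAgen Z (Sig (th(k := th k))) (0\<^sub>m m m) ((th(k := th k)) 1) 1 N i * submatrix (Gm Z (Sig (th(k := th k)))) (N i) {i}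
            + Avec Z (Sig (th(k := th k))) ((th(k := th k)) 1) N i * submatrix (Z * 0\<^sub>m m m * transpose_mat Z) (N i) {i}) $$ (0,0)"
        unfolding thk by simp
    qed
    show ?thesis using G unfolding gradL_def dDm_def dZ thk .
  next
    case False
    then have k2: "k \<in> {2..q}" using k by auto
    define H where "H = dSig k"
    have Hc: "H \<in> carrier_mat m m" unfolding H_def by (rule dSig_carrier[OF k2])
    have Sd: "hasMD (\<lambda>t. Sig (th(k := t))) H (th k) m m"
      unfolding hasMD_def H_def using dSig_carrier[OF k2] Sig_carrier Sig_deriv[OF k2] by auto
    have sd: "DERIV (\<lambda>t. (th(k := t)) 1) (th k) :> 0" using False by simp
    define W where "W = Z * H * transpose_mat Z"
    have Wc: "W \<in> carrier_mat n n" using Z Hc by (simp add: W_def)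
    have dAt: "dAgen Z (Sig th) H (th 1) 0 N i = dA_theta Z (Sig th) (th 1) N H i" if "i < n" for i
      by (rule spec_theta[where N=N and i=i, OF Z S0 Hc that Ni[OF that] Ci[OF that]])
    have dAtc: "dA_theta Z (Sig th) (th 1) N H i \<in> carrier_mat 1 (card (N i))" if "i < n" for i
    proof -
      note a = Rc[OF that] Ci[OF that] sub_row_carrier[OF Wc that Ni[OF that]] sub_carrier[OF Wc Ni[OF that]]
      have 1: "submatrix W {i} (N i) * CNinv Z (Sig th) (th 1) N i \<in> carrier_mat 1 (card (N i))"
        by (rule mult_carrier_mat[OF a(3) a(2)])
      have 2: "submatrix (Gm Z (Sig th)) {i} (N i) * CNinv Z (Sig th) (th 1) N i * submatrix W (N i) (N i)
          * CNinv Z (Sig th) (th 1) N i \<in> carrier_mat 1 (card (N i))"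
        by (rule mult_carrier_mat[OF mult_carrier_mat[OF mult_carrier_mat[OF a(1) a(2)] a(4)] a(2)])
      show ?thesis unfolding dA_theta_def W_def[symmetric] H_def[symmetric] by (rule minus_carrier_mat[OF 2])
    qed
    have G: "DERIV (\<lambda>t. Ltilde y F Z (Sig (th(k := t))) ((th(k := t)) 1) N) (th k) :>
      (let r = y - F; u = minv (Dm Z (Sig (th(k := th k))) ((th(k := th k)) 1) N) *\<^sub>v (Bm Z (Sig (th(k := th k))) ((th(k := th k)) 1) N *\<^sub>v r);
          uk = dBm Z (Sig th) (th 1) N dSig k *\<^sub>v r in
        1/2 * (2 * (uk \<bullet> u) - u \<bullet> (mat_diag n (dDi Z (Sig th) (th 1) N dSig k) *\<^sub>v u))
        + 1/2 * (\<Sum>i<n. 1 / Dsc Z (Sig (th(k := th k))) ((th(k := th k)) 1) N i * dDi Z (Sig th) (th 1) N dSig k i))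
    \<and> (\<forall>i<n. \<forall>j<n. DERIV (\<lambda>t. Bm Z (Sig (th(k := t))) ((th(k := t)) 1) N $$ (i,j)) (th k) :> dBm Z (Sig th) (th 1) N dSig k $$ (i,j))
    \<and> (\<forall>i<n. DERIV (\<lambda>t. Dsc Z (Sig (th(k := t))) ((th(k := t)) 1) N i) (th k) :> dDi Z (Sig th) (th 1) N dSig k i)"
    proof (rule final_generic[OF Z y F Sd sd])
      show "\<And>v. v \<in> carrier_vec m \<Longrightarrow> 0 \<le> v \<bullet> (Sig (th(k := th k)) *\<^sub>v v)" unfolding thk by (rule Sig_psd)
      show "0 < (th(k := th k)) 1" unfolding thk by (rule sigma_pos)
      show "\<And>i. i < n \<Longrightarrow> N i \<subseteq> {..<i}" by (rule N)
      show "dBm Z (Sig th) (th 1) N dSig k \<in> carrier_mat n n" unfolding dBm_def dZ using scat by simp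
      fix i j assume ij: "i < n" "j < n"
      {
        assume j: "j \<in> N i" and "i \<noteq> j"
        have "dBm Z (Sig th) (th 1) N dSig k $$ (i,j) = (- dA_theta Z (Sig th) (th 1) N H i) $$ (0, posN N i j)"
          unfolding dBm_def dZ H_def using False scat_in[OF ij j] by simp
        also have "\<dots> = - (dA_theta Z (Sig th) (th 1) N H i $$ (0, posN N i j))"
          using dAtc[OF ij(1)] posc[OF ij(1) j] by simp
        finally show "dBm Z (Sig th) (th 1) N dSig k $$ (i,j) =
           - (dAgen Z (Sig (th(k := th k))) H ((th(k := th k)) 1) 0 N i $$ (0, posN N i j))"
          unfolding thk dAt[OF ij(1)] .
      }
      {
        assume j: "j \<notin> N i"
        show "dBm Z (Sig th) (th 1) N dSig k $$ (i,j) = 0"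
          unfolding dBm_def dZ using False scat_out[OF ij j] by simp
      }
    next
      fix i assume i: "i < n"
      have e0: "W + 0 \<cdot>\<^sub>m 1\<^sub>m n = W" using Wc by (intro eq_matI) auto
      have X: "dA_theta Z (Sig th) (th 1) N H i * submatrix (Gm Z (Sig th)) (N i) {i} \<in> carrier_mat 1 1"
        using dAtc[OF i] Colc[OF i] by simp
      have Y: "Avec Z (Sig th) (th 1) N i * submatrix W (N i) {i} \<in> carrier_mat 1 1"
        using A0c[OF i] sub_col_carrier[OF Wc i Ni[OF i]] by simp
      have "(W + 0 \<cdot>\<^sub>m 1\<^sub>m n) $$ (i,i)
         - (dAgen Z (Sig th) H (th 1) 0 N i * submatrix (Gm Z (Sig th)) (N i) {i}
            + Avec Z (Sig th) (th 1) N i * submatrix W (N i) {i}) $$ (0,0)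
         = W $$ (i,i) - (dA_theta Z (Sig th) (th 1) N H i * submatrix (Gm Z (Sig th)) (N i) {i}) $$ (0,0)
             - (Avec Z (Sig th) (th 1) N i * submatrix W (N i) {i}) $$ (0,0)"
      proof -
        have "(dA_theta Z (Sig th) (th 1) N H i * submatrix (Gm Z (Sig th)) (N i) {i}
            + Avec Z (Sig th) (th 1) N i * submatrix W (N i) {i}) $$ (0,0)
          = (dA_theta Z (Sig th) (th 1) N H i * submatrix (Gm Z (Sig th)) (N i) {i}) $$ (0,0)
            + (Avec Z (Sig th) (th 1) N i * submatrix W (N i) {i}) $$ (0,0)"
          by (rule index_add_mat(1)) (use Y in auto)
        then show ?thesis unfolding e0 dAt[OF i] by simp
      qed
      also have "\<dots> = dDi Z (Sig th) (th 1) N dSig k i"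
        unfolding dDi_def dD_theta_def W_def H_def using False by simp
      finally show "dDi Z (Sig th) (th 1) N dSig k i =
        (Z * H * transpose_mat Z + 0 \<cdot>\<^sub>m 1\<^sub>m n) $$ (i,i)
         - (dAgen Z (Sig (th(k := th k))) H ((th(k := th k)) 1) 0 N i * submatrix (Gm Z (Sig (th(k := th k)))) (N i) {i}
            + Avec Z (Sig (th(k := th k))) ((th(k := th k)) 1) N i * submatrix (Z * H * transpose_mat Z) (N i) {i}) $$ (0,0)"
        unfolding thk W_def[symmetric] by simp
    qed
    show ?thesis using G unfolding gradL_def dDm_def dZ thk .
  qed
qed

end
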